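(* The map sending a triple $(r,H,\mathbf S_r)$ with $0\le r\le m$, $H\in\mathcal G(m,r;2)$, $\mathbf S_r\in\mathrm{Sym}(r;2)$ to the row space $$\mathrm{rs}\Big[\ \mathbf I_{m|r}\mathbf P_{\mathcal I}^{T}\ \ \Big|\ \ (\mathbf I_{m|r}\tilde{\mathbf S}_r+\mathbf I_{m|-r})\mathbf P_{\mathcal I}^{-1}\ \Big]\subseteq\mathbb F_2^{2m}$$ (the row space of an $m\times 2m$ binary matrix) is a bijection from the set of such triples onto the set $\mathcal L(2m,m)$ of Lagrangian subspaces of $\mathbb F_2^{2m}$. In particular $|\mathcal L(2m,m)|=\prod_{i=1}^m(2^i+1)=\sum_{r=0}^m 2^{r(r+1)/2}\binom{m}{r}_2$.
   Context: Binary vectors are columns over $\mathbb F_2$; $\mathrm{Sym}(r;2)$ is the set of symmetric binary $r\times r$ matrices and $\mathcal G(m,r;2)$ the set of $r$-dimensional subspaces of $\mathbb F_2^m$; $\binom{m}{r}_2=|\mathcal G(m,r;2)|$. On $\mathbb F_2^{2m}$, viewing elements as pairs $(\mathbf a,\mathbf b)$ with $\mathbf a,\mathbf b\in\mathbb F_2^m$, the symplectic form is $\langle(\mathbf a,\mathbf b),(\mathbf c,\mathbf d)\rangle_s=\mathbf b^T\mathbf c+\mathbf a^T\mathbf d$. A Lagrangian subspace is an $m$-dimensional subspace $L$ with $\langle x,y\rangle_s=0$ for all $x,y\in L$. $\mathbf I_{m|r}$ is the $m\times m$ matrix with $\mathbf I_r$ in the upper-left corner and zeros elsewhere, $\mathbf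 I_{m|-r}=\mathbf I_m-\mathbf I_{m|r}$. Echelon data: for $0\le r\le m$ and $H\in\mathcal G(m,r;2)$, let $\mathbf H_{\mathcal I}$ be the unique $m\times r$ binary matrix in column reduced echelon form with column space $H$: there are indices $i_1<\dots<i_r$, $\mathcal I=\{i_1,\dots,i_r\}$, such that rows $i_1,\dots,i_r$ of $\mathbf H_{\mathcal I}$ form $\mathbf I_r$ and column $j$ of $\mathbf H_{\mathcal I}$ is zero in all rows above row $i_j$. Let $\mathbf I_{\mathcal I}$ (resp. $\mathbf I_{\tilde{\mathcal I}}$) be the $m\times r$ (resp. $m\times(m-r)$) matrix whose columns are the standard basis vectors $\mathbf e_i$ with $i\in\mathcal I$ (resp. $i\notin\mathcal I$), in increasing order of $i$. Put $\mathbf P_{\mathcal I}=[\mathbf H_{\mathcal I}\ \ \mathbf I_{\tilde{\mathcal I}}]\in\mathrm{GL}(m;2)$, and define the $m\times(m-r)$ matrix $\tilde{\mathbf H}_{\mathcal I}$ by $\mathbf P_{\mathcal I}^{-T}=[\mathbf I_{\mathcal I}\ \ \tilde{\mathbf H}_{\mathcal I}]$. (For $r=0$: $H=\{0\}$, $\mathbf P_{\mathcal I}=\mathbf I_m$.) For $\mathbf S_r\in\mathrm{Sym}(r;2)$, $\tilde{\mathbf S}_r\in\mathrm{Sym}(m;2)$ denotes the matrix with $\mathbf S_r$ as its upper-left $r\times r$ block and zeros elsewhere. *)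

theory Defs
  imports "Jordan_Normal_Form.VS_Connect" "HOL-Library.Z2"
begin

text \<open>Binary vectors of length n are elements of carrier_vec n :: bit vec set,
  binary matrices are bit mat. Indices are 0-based.\<close>

abbreviation F2V :: "nat \<Rightarrow> (bit, bit vec) module" where
  "F2V n \<equiv> module_vec TYPE(bit) n"

definition grass :: "nat \<Rightarrow> nat \<Rightarrow> bit vec set set" where
  "grass m r = {W. subspace class_ring W (F2V m) \<and>
                   vectorspace.dim class_ring ((F2V m)\<lparr>carrier := W\<rparr>) = r}"

definition gauss_binom2 :: "nat \<Rightarrow> nat \<Rightarrow> nat" where
  "gauss_binom2 m r = card (grass m r)"

definition symp_form :: "nat \<Rightarrow> bit vec \<Rightarrow> bit vec \<Rightarrow> bit" where
  "symp_form m x y = vec_last x m \<bullet> vec_first y m + vec_first x m \<bullet> vec_last y m"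

definition lagrangians :: "nat \<Rightarrow> bit vec set set" where
  "lagrangians m = {L. L \<in> grass (2*m) m \<and> (\<forall>x\<in>L. \<forall>y\<in>L. symp_form m x y = 0)}"

definition crref :: "nat \<Rightarrow> nat \<Rightarrow> bit mat \<Rightarrow> nat set \<Rightarrow> bool" where
  "crref m r Hm I \<longleftrightarrow> Hm \<in> carrier_mat m r \<and> I \<subseteq> {0..<m} \<and> card I = r \<and>
     (let p = sorted_list_of_set I in
       (\<forall>j<r. \<forall>k<r. Hm $$ (p ! j, k) = (if j = k then 1 else 0)) \<and>
       (\<forall>j<r. \<forall>i<p ! j. Hm $$ (i, j) = 0))"

definition echelon :: "nat \<Rightarrow> nat \<Rightarrow> bit vec set \<Rightarrow> bit mat \<times> nat set" where
  "echelon m r H = (THE (Hm, I). crref m r Hm I \<and> vec_space.col_space m Hm = H)"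

definition mat_inv :: "nat \<Rightarrow> bit mat \<Rightarrow> bit mat" where
  "mat_inv m A = (SOME B. B \<in> carrier_mat m m \<and> A * B = 1\<^sub>m m \<and> B * A = 1\<^sub>m m)"

definition P_mat :: "nat \<Rightarrow> nat \<Rightarrow> bit vec set \<Rightarrow> bit mat" where
  "P_mat m r H = (let (Hm, I) = echelon m r H in
     mat_of_cols m (cols Hm @ map (unit_vec m) (sorted_list_of_set ({0..<m} - I))))"

definition I_upper :: "nat \<Rightarrow> nat \<Rightarrow> bit mat" where
  "I_upper m r = mat m m (\<lambda>(i, j). if i = j \<and> i < r then 1 else 0)"

definition I_lower :: "nat \<Rightarrow> nat \<Rightarrow> bit mat" where
  "I_lower m r = 1\<^sub>m m - I_upper m r"

definition sym_mats :: "nat \<Rightarrow> bit mat set" where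
  "sym_mats r = {S. S \<in> carrier_mat r r \<and> transpose_mat S = S}"

definition embed_sym :: "nat \<Rightarrow> bit mat \<Rightarrow> bit mat" where
  "embed_sym m S = mat m m (\<lambda>(i, j). if i < dim_row S \<and> j < dim_col S then S $$ (i, j) else 0)"

definition hconcat :: "bit mat \<Rightarrow> bit mat \<Rightarrow> bit mat" where
  "hconcat A B = mat (dim_row A) (dim_col A + dim_col B)
     (\<lambda>(i, j). if j < dim_col A then A $$ (i, j) else B $$ (i, j - dim_col A))"

definition triples :: "nat \<Rightarrow> (nat \<times> bit vec set \<times> bit mat) set" where
  "triples m = {(r, H, S). r \<le> m \<and> H \<in> grass m r \<and> S \<in> sym_mats r}"

definition lag_map :: "nat \<Rightarrow> nat \<times> bit vec set \<times> bit mat \<Rightarrow> bit vec set" where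
  "lag_map m = (\<lambda>(r, H, S).
     (let P = P_mat m r H in
      vec_space.row_space (2*m)
        (hconcat (I_upper m r * transpose_mat P)
                 ((I_upper m r * embed_sym m S + I_lower m r) * mat_inv m P))))"

end

theory Submission
  imports Defs
begin


lemma UNIV_bit: "(UNIV::bit set) = {0,1}"
  using bit.exhaust by auto

lemma card_UNIV_bit[simp]: "card (UNIV::bit set) = 2"
  by (simp add: UNIV_bit)

lemma finite_UNIV_bit[simp]: "finite (UNIV::bit set)"
  by (simp add: UNIV_bit)

lemma bit_add_self[simp]: "(x::bit) + x = 0"
  by (cases x) auto

lemma bit_add_eq0: "(x::bit) + y = 0 \<longleftrightarrow> x = y"
  by (cases x; cases y) auto

lemma bit_minus_eq[simp]: "(x::bit) - y = x + y" by simp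

declare add_bit_eq_xor[simp del] mult_bit_eq_and[simp del]

lemma vec_add_self_bit[simp]: "(x :: bit vec) \<in> carrier_vec n \<Longrightarrow> x + x = 0\<^sub>v n"
  by (intro eq_vecI) auto

lemma card_carrier_vec_bit: "card (carrier_vec n :: bit vec set) = 2 ^ n"
  and finite_carrier_vec_bit: "finite (carrier_vec n :: bit vec set)"
proof -
  let ?f = "\<lambda>v::bit vec. restrict (\<lambda>i. v $ i) {0..<n}"
  have bij: "bij_betw ?f (carrier_vec n) ({0..<n} \<rightarrow>\<^sub>E (UNIV::bit set))"
  proof (rule bij_betwI[where g = "\<lambda>f. vec n f"])
    show "?f \<in> carrier_vec n \<rightarrow> {0..<n} \<rightarrow>\<^sub>E UNIV" by auto
    show "(\<lambda>f. vec n f) \<in> ({0..<n} \<rightarrow>\<^sub>E UNIV) \<rightarrow> carrier_vec n" by auto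
    show "vec n (?f x) = x" if "x \<in> carrier_vec n" for x
      using that by (intro eq_vecI) auto
    show "?f (vec n y) = y" if "y \<in> {0..<n} \<rightarrow>\<^sub>E UNIV" for y
      using that by (intro ext) (auto simp: PiE_def extensional_def)
  qed
  have "card ({0..<n} \<rightarrow>\<^sub>E (UNIV::bit set)) = 2 ^ n"
    by (simp add: card_PiE)
  moreover have "finite ({0..<n} \<rightarrow>\<^sub>E (UNIV::bit set))"
    by (simp add: finite_PiE)
  ultimately show "card (carrier_vec n :: bit vec set) = 2 ^ n"
    "finite (carrier_vec n :: bit vec set)"
    using bij_betw_same_card[OF bij] bij_betw_finite[OF bij] by auto
qed

abbreviation subsp :: "nat \<Rightarrow> bit vec set \<Rightarrow> bool" where
  "subsp n W \<equiv> subspace class_ring W (F2V n)"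

definition dimS :: "nat \<Rightarrow> bit vec set \<Rightarrow> nat" where
  "dimS n W = vectorspace.dim class_ring ((F2V n)\<lparr>carrier := W\<rparr>)"

lemma subsp_submodule: "subsp n W \<Longrightarrow> submodule class_ring W (F2V n)"
  by (simp add: subspace_def)

lemma subsp_carrier: "subsp n W \<Longrightarrow> W \<subseteq> carrier_vec n"
  using subsp_submodule[unfolded submodule_def] by (auto simp: module_vec_simps)

lemma subsp_carrierD: "subsp n W \<Longrightarrow> x \<in> W \<Longrightarrow> x \<in> carrier_vec n"
  using subsp_carrier by auto

lemma subsp_add: "subsp n W \<Longrightarrow> x \<in> W \<Longrightarrow> y \<in> W \<Longrightarrow> x + y \<in> W"
  using submodule.m_closed[OF subsp_submodule[where n=n and W=W]] by (auto simp: module_vec_simps)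

lemma subsp_smult: "subsp n W \<Longrightarrow> x \<in> W \<Longrightarrow> c \<cdot>\<^sub>v x \<in> W"
  using submodule.smult_closed[OF subsp_submodule[where n=n and W=W]] by (auto simp: module_vec_simps)

lemma subsp_zero: "subsp n W \<Longrightarrow> 0\<^sub>v n \<in> W"
  using submodule.zero_closed[OF subsp_submodule[where n=n and W=W]] by (auto simp: module_vec_simps)

lemma subspI:
  assumes "W \<subseteq> carrier_vec n" "0\<^sub>v n \<in> W" "\<And>x y. x \<in> W \<Longrightarrow> y \<in> W \<Longrightarrow> x + y \<in> W"
    "\<And>c x. x \<in> W \<Longrightarrow> c \<cdot>\<^sub>v x \<in> W"
  shows "subsp n W"
  unfolding subspace_def submodule_def
  using assms vec_vs[where 'a = bit and n = n] vec_module[where 'a = bit and n = n]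
  by (auto simp: module_vec_simps)

lemma subsp_finite: "subsp n W \<Longrightarrow> finite W"
  using subsp_carrier finite_carrier_vec_bit finite_subset by blast

lemma subsp_sum:
  assumes W: "subsp n W" and J: "finite J" and v: "\<And>j. j \<in> J \<Longrightarrow> v j \<in> W"
  shows "vec n (\<lambda>k. \<Sum>j\<in>J. c j * v j $ k) \<in> W"
  using J v
proof (induction J rule: finite_induct)
  case empty
  then show ?case using subsp_zero[OF W] by (simp add: zero_vec_def)
next
  case (insert j J)
  have vj: "v j \<in> carrier_vec n" using insert subsp_carrierD[OF W] by auto
  have "vec n (\<lambda>k. \<Sum>j\<in>insert j J. c j * v j $ k) =
     c j \<cdot>\<^sub>v v j + vec n (\<lambda>k. \<Sum>j\<in>J. c j * v j $ k)"
    using insert vj by (intro eq_vecI) auto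
  moreover have "c j \<cdot>\<^sub>v v j \<in> W" using insert subsp_smult[OF W] by auto
  ultimately show ?case using insert subsp_add[OF W] by auto
qed

section \<open>Cardinality and dimension\<close>

lemma subsp_card_dim:
  assumes W: "subsp n W"
  shows "card W = 2 ^ dimS n W"
proof -
  interpret V: vec_space "TYPE(bit)" n .
  have sm: "submodule class_ring W (F2V n)" using subsp_submodule[OF W] .
  interpret VW: vectorspace class_ring "(F2V n)\<lparr>carrier := W\<rparr>"
    using V.subspace_is_vs[OF W] .
  have Wc: "W \<subseteq> carrier_vec n" using subsp_carrier[OF W] .
  have spanW: "V.span W = W"
    using V.span_is_subset[OF _ sm] V.in_own_span[OF Wc] by auto
  have "VW.fin_dim"
    unfolding VW.fin_dim_def
    using subsp_finite[OF W] V.span_li_not_depend(1)[OF _ sm, of W] spanW by auto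
  then obtain \<beta> where fb: "finite \<beta>" and b: "VW.basis \<beta>"
    using VW.finite_basis_exists by blast
  have dim: "dimS n W = card \<beta>"
    unfolding dimS_def using VW.dim_basis[OF fb b] .
  have bW: "\<beta> \<subseteq> W" using b unfolding VW.basis_def by auto
  have bc: "\<beta> \<subseteq> carrier_vec n" using bW Wc by auto
  have span: "V.span \<beta> = W"
    using b unfolding VW.basis_def using V.span_li_not_depend(1)[OF bW sm] by auto
  have li: "\<not> V.lin_dep \<beta>"
    using b unfolding VW.basis_def using V.span_li_not_depend(2)[OF bW sm] by auto
  let ?f = "\<lambda>a. V.lincomb a \<beta>"
  have inj: "inj_on ?f (\<beta> \<rightarrow>\<^sub>E UNIV)"
  proof (rule inj_onI)
    fix a b assume a: "a \<in> \<beta> \<rightarrow>\<^sub>E UNIV" and bb: "b \<in> \<beta> \<rightarrow>\<^sub>E UNIV" and eq: "?f a = ?f b"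
    have "V.lincomb (\<lambda>v. a v + b v) \<beta> = ?f a + ?f b"
      using V.lincomb_sum[OF fb bc, of a b] by auto
    also have "\<dots> = ?f a + ?f a" using eq by simp
    also have "\<dots> = 0\<^sub>v n"
      using V.lincomb_closed[OF bc, of a] by auto
    finally have z: "V.lincomb (\<lambda>v. a v + b v) \<beta> = 0\<^sub>v n" .
    have "\<forall>v\<in>\<beta>. a v + b v = 0"
    proof (rule ccontr)
      assume "\<not> ?thesis"
      then obtain v where "v \<in> \<beta>" "a v + b v \<noteq> 0" by auto
      then have "V.lin_dep \<beta>" unfolding V.lin_dep_def using fb z
        by (intro exI[of _ \<beta>] exI[of _ "\<lambda>v. a v + b v"] exI[of _ v]) auto
      with li show False by auto
    qed
    then show "a = b" using a bb
      by (intro extensionalityI[where A = \<beta>]) (auto simp: bit_add_eq0 PiE_def)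
  qed
  have img: "?f ` (\<beta> \<rightarrow>\<^sub>E UNIV) = W"
  proof
    show "?f ` (\<beta> \<rightarrow>\<^sub>E UNIV) \<subseteq> W"
      using span unfolding V.span_def using fb by blast
    show "W \<subseteq> ?f ` (\<beta> \<rightarrow>\<^sub>E UNIV)"
    proof
      fix w assume "w \<in> W"
      then obtain a where a: "V.lincomb a \<beta> = w" using V.finite_in_span[OF fb bc] span by auto
      have "V.lincomb (restrict a \<beta>) \<beta> = V.lincomb a \<beta>"
        by (rule V.lincomb_cong) (use bc in auto)
      moreover have "restrict a \<beta> \<in> \<beta> \<rightarrow>\<^sub>E UNIV" by auto
      ultimately show "w \<in> ?f ` (\<beta> \<rightarrow>\<^sub>E UNIV)" using a by (metis image_eqI)
    qed
  qed
  have "card W = card (\<beta> \<rightarrow>\<^sub>E (UNIV::bit set))"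
    using card_image[OF inj] img by simp
  also have "\<dots> = 2 ^ card \<beta>" using fb by (simp add: card_PiE)
  finally show ?thesis using dim by simp
qed



lemma bit_add_cancel[simp]: "(a::bit) + b + b = a"
  by (simp add: add.assoc)

lemma bit_eq_0_or_1: "(x::bit) = 0 \<or> x = 1" by (cases x) auto

definition ech_fam :: "nat \<Rightarrow> bit vec set \<Rightarrow> nat set \<Rightarrow> (nat \<Rightarrow> bit vec) \<Rightarrow> bool" where
  "ech_fam m H I v \<longleftrightarrow> I \<subseteq> {0..<m} \<and>
     (\<forall>i\<in>I. v i \<in> H \<and> (\<forall>i'\<in>I. v i $ i' = (if i' = i then 1 else 0)) \<and> (\<forall>k<i. v i $ k = 0)) \<and>
     (\<forall>h\<in>H. h = vec m (\<lambda>k. \<Sum>i\<in>I. h $ i * v i $ k))"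

lemma sum_delta_bit:
  assumes "finite I" 
  shows "(\<Sum>i\<in>I. (c i :: bit) * (if i' = i then 1 else 0)) = (if i' \<in> I then c i' else 0)"
proof -
  have "(\<Sum>i\<in>I. (c i :: bit) * (if i' = i then 1 else 0)) = (\<Sum>i\<in>I. if i' = i then c i else 0)"
    by (rule sum.cong) auto
  also have "\<dots> = (if i' \<in> I then c i' else 0)" using assms by simp
  finally show ?thesis .
qed

lemma ech_fam_exists:
  assumes "subsp m H" shows "\<exists>I v. ech_fam m H I v"
  using assms
proof (induction "card H" arbitrary: H rule: less_induct)
  case less
  note W = less.prems
  have fin: "finite H" using subsp_finite[OF W] .
  have Hc: "\<And>h. h \<in> H \<Longrightarrow> h \<in> carrier_vec m" using subsp_carrierD[OF W] .
  show ?case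
  proof (cases "\<exists>h\<in>H. \<exists>k<m. h $ k = 1")
    case False
    have z: "h = 0\<^sub>v m" if "h \<in> H" for h
    proof (rule eq_vecI)
      show "dim_vec h = dim_vec (0\<^sub>v m)" using Hc[OF that] by auto
      fix i assume "i < dim_vec (0\<^sub>v m)"
      then show "h $ i = 0\<^sub>v m $ i" using False that bit_eq_0_or_1[of "h $ i"] by auto
    qed
    show ?thesis
      by (rule exI[of _ "{}"], rule exI[of _ "\<lambda>_. 0\<^sub>v m"])
        (use z in \<open>auto simp: ech_fam_def zero_vec_def\<close>)
  next
    case True
    define i0 where "i0 = (LEAST k. \<exists>h\<in>H. k < m \<and> h $ k = 1)"
    have "\<exists>h\<in>H. i0 < m \<and> h $ i0 = 1"
      unfolding i0_def by (rule LeastI_ex) (use True in blast)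
    then obtain u where uH: "u \<in> H" and i0m: "i0 < m" and u1: "u $ i0 = 1" by auto
    have below: "h $ k = 0" if "h \<in> H" "k < i0" for h k
    proof -
      have "\<not> (\<exists>h\<in>H. k < m \<and> h $ k = 1)"
        using not_less_Least[of k "\<lambda>k. \<exists>h\<in>H. k < m \<and> h $ k = 1"] that(2) unfolding i0_def by blast
      then show ?thesis using that i0m bit_eq_0_or_1[of "h $ k"] by auto
    qed
    define H' where "H' = {h\<in>H. h $ i0 = 0}"
    have W': "subsp m H'"
    proof (rule subspI)
      show "H' \<subseteq> carrier_vec m" using Hc H'_def by auto
      show "0\<^sub>v m \<in> H'" using subsp_zero[OF W] i0m H'_def by auto
      show "x + y \<in> H'" if "x \<in> H'" "y \<in> H'" for x y
      proof -
        have "y \<in> carrier_vec m" using that Hc H'_def by auto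
        then show ?thesis using that subsp_add[OF W] i0m H'_def by auto
      qed
      show "c \<cdot>\<^sub>v x \<in> H'" if "x \<in> H'" for c x
      proof -
        have "x \<in> carrier_vec m" using that Hc H'_def by auto
        then show ?thesis using that subsp_smult[OF W] i0m H'_def by auto
      qed
    qed
    have "u \<notin> H'" by (simp add: H'_def u1)
    moreover have "H' \<subseteq> H" by (auto simp: H'_def)
    ultimately have "H' \<subset> H" using uH by blast
    then have "card H' < card H" using fin psubset_card_mono by blast
    then obtain I' v' where E': "ech_fam m H' I' v'" using less.hyps W' by blast
    have I'm: "I' \<subseteq> {0..<m}" using E' ech_fam_def by auto
    have finI': "finite I'" using I'm finite_subset by blast
    have v'H': "v' i \<in> H'" if "i \<in> I'" for i using E' that ech_fam_def by auto
    have v'd: "v' i $ i' = (if i' = i then 1 else 0)" if "i \<in> I'" "i' \<in> I'" for i i'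
      using E' that unfolding ech_fam_def by auto
    have v'b: "v' i $ k = 0" if "i \<in> I'" "k < i" for i k
      using E' that unfolding ech_fam_def by auto
    have v'sp: "h = vec m (\<lambda>k. \<Sum>i\<in>I'. h $ i * v' i $ k)" if "h \<in> H'" for h
      using E' that unfolding ech_fam_def by auto
    have gt: "i0 < i" if "i \<in> I'" for i
    proof -
      have "v' i \<in> H" "v' i $ i = 1" "v' i $ i0 = 0" using v'H'[OF that] v'd[OF that that] H'_def by auto
      then show ?thesis using below[of "v' i" i] by (metis linorder_neqE_nat zero_neq_one)
    qed
    define w where "w = vec m (\<lambda>k. u $ k + (\<Sum>i\<in>I'. u $ i * v' i $ k))"
    have wH: "w \<in> H"
    proof -
      have "vec m (\<lambda>k. \<Sum>i\<in>I'. u $ i * v' i $ k) \<in> H'" by (rule subsp_sum[OF W' finI' v'H'])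
      then have s: "vec m (\<lambda>k. \<Sum>i\<in>I'. u $ i * v' i $ k) \<in> H" using H'_def by auto
      have "w = u + vec m (\<lambda>k. \<Sum>i\<in>I'. u $ i * v' i $ k)"
        unfolding w_def using Hc[OF uH] by (intro eq_vecI) auto
      then show ?thesis using subsp_add[OF W uH s] by simp
    qed
    have w_i0: "w $ i0 = 1"
    proof -
      have "(\<Sum>i\<in>I'. u $ i * v' i $ i0) = 0"
        by (rule sum.neutral) (use v'H' H'_def in auto)
      then show ?thesis unfolding w_def using i0m u1 by simp
    qed
    have w_I': "w $ i' = 0" if "i' \<in> I'" for i'
    proof -
      have im: "i' < m" using I'm that by auto
      have "(\<Sum>i\<in>I'. u $ i * v' i $ i') = (\<Sum>i\<in>I'. u $ i * (if i' = i then 1 else 0))"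
        by (rule sum.cong) (use v'd that in auto)
      also have "\<dots> = u $ i'" using sum_delta_bit[OF finI'] that by simp
      finally show ?thesis unfolding w_def using im by simp
    qed
    have w_b: "w $ k = 0" if "k < i0" for k
    proof -
      have "(\<Sum>i\<in>I'. u $ i * v' i $ k) = 0"
        by (rule sum.neutral) (use v'b gt that in force)
      then show ?thesis unfolding w_def using that i0m below[OF uH that] by simp
    qed
    define I where "I = insert i0 I'"
    define v where "v = v'(i0 := w)"
    have i0I': "i0 \<notin> I'" using gt by blast
    have "ech_fam m H I v"
      unfolding ech_fam_def
    proof (intro conjI ballI allI impI)
      show "I \<subseteq> {0..<m}" using I'm i0m I_def by auto
    next
      fix i assume i: "i \<in> I"
      show "v i \<in> H"
        using i wH v'H' H'_def i0I' unfolding I_def v_def by auto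
      show "v i $ i' = (if i' = i then 1 else 0)" if "i' \<in> I" for i'
        using i that w_i0 w_I' v'd v'H' H'_def i0I' unfolding I_def v_def by auto
      show "v i $ k = 0" if "k < i" for k
        using i that w_b v'b i0I' unfolding I_def v_def by auto
    next
      fix h assume hH: "h \<in> H"
      define g where "g = h + h $ i0 \<cdot>\<^sub>v w"
      have gH: "g \<in> H" unfolding g_def using subsp_add[OF W hH subsp_smult[OF W wH]] .
      have wc: "w \<in> carrier_vec m" unfolding w_def by auto
      have hc: "h \<in> carrier_vec m" using Hc[OF hH] .
      have "g $ i0 = 0" unfolding g_def using wc i0m w_i0 by simp
      then have gH': "g \<in> H'" using gH H'_def by auto
      have gi: "g $ i = h $ i" if "i \<in> I'" for i
        unfolding g_def using wc that I'm w_I'[OF that] by auto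
      show "h = vec m (\<lambda>k. \<Sum>i\<in>I. h $ i * v i $ k)"
      proof (rule eq_vecI)
        show "dim_vec h = dim_vec (vec m (\<lambda>k. \<Sum>i\<in>I. h $ i * v i $ k))" using hc by auto
        fix k assume "k < dim_vec (vec m (\<lambda>k. \<Sum>i\<in>I. h $ i * v i $ k))"
        then have k: "k < m" by auto
        have "g $ k = (\<Sum>i\<in>I'. g $ i * v' i $ k)"
          using arg_cong[OF v'sp[OF gH'], of "\<lambda>x. x $ k"] k by simp
        also have "\<dots> = (\<Sum>i\<in>I'. h $ i * v i $ k)"
          by (rule sum.cong) (use gi i0I' v_def in auto)
        finally have gk: "g $ k = (\<Sum>i\<in>I'. h $ i * v i $ k)" .
        have "g $ k = h $ k + h $ i0 * w $ k" unfolding g_def using wc k by simp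
        then have "h $ k = (\<Sum>i\<in>I'. h $ i * v i $ k) + h $ i0 * v i0 $ k"
          using gk v_def by (metis bit_add_cancel fun_upd_same)
        also have "\<dots> = (\<Sum>i\<in>I. h $ i * v i $ k)"
          unfolding I_def using finI' i0I' by (simp add: add.commute)
        finally show "h $ k = vec m (\<lambda>k. \<Sum>i\<in>I. h $ i * v i $ k) $ k" using k by simp
      qed
    qed
    then show ?thesis by blast
  qed
qed

lemma ech_fam_card:
  assumes W: "subsp m H" and E: "ech_fam m H I v"
  shows "card H = 2 ^ card I"
proof -
  have Im: "I \<subseteq> {0..<m}" using E ech_fam_def by auto
  have finI: "finite I" using Im finite_subset by blast
  have vH: "v i \<in> H" if "i \<in> I" for i using E that ech_fam_def by auto
  have vd: "v i $ i' = (if i' = i then 1 else 0)" if "i \<in> I" "i' \<in> I" for i i'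
    using E that unfolding ech_fam_def by auto
  have sp: "h = vec m (\<lambda>k. \<Sum>i\<in>I. h $ i * v i $ k)" if "h \<in> H" for h
    using E that unfolding ech_fam_def by auto
  let ?f = "\<lambda>h::bit vec. restrict (\<lambda>i. h $ i) I"
  have inj: "inj_on ?f H"
  proof (rule inj_onI)
    fix h h' assume h: "h \<in> H" and h': "h' \<in> H" and eq: "?f h = ?f h'"
    have "\<And>i. i \<in> I \<Longrightarrow> h $ i = h' $ i" using eq by (metis restrict_apply')
    then have "vec m (\<lambda>k. \<Sum>i\<in>I. h $ i * v i $ k) = vec m (\<lambda>k. \<Sum>i\<in>I. h' $ i * v i $ k)"
      by (intro eq_vecI) auto
    then show "h = h'" using sp[OF h] sp[OF h'] by simp
  qed
  have img: "?f ` H = I \<rightarrow>\<^sub>E UNIV"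
  proof
    show "?f ` H \<subseteq> I \<rightarrow>\<^sub>E UNIV" by auto
    show "I \<rightarrow>\<^sub>E UNIV \<subseteq> ?f ` H"
    proof
      fix c assume c: "c \<in> I \<rightarrow>\<^sub>E (UNIV :: bit set)"
      define h where "h = vec m (\<lambda>k. \<Sum>i\<in>I. c i * v i $ k)"
      have hH: "h \<in> H" unfolding h_def by (rule subsp_sum[OF W finI vH])
      have "?f h = c"
      proof (rule ext)
        fix i'
        show "?f h i' = c i'"
        proof (cases "i' \<in> I")
          case True
          then have "i' < m" using Im by auto
          then have "h $ i' = (\<Sum>i\<in>I. c i * (if i' = i then 1 else 0))"
            unfolding h_def using vd True by (auto intro: sum.cong)
          also have "\<dots> = c i'" using sum_delta_bit[OF finI] True by simp
          finally show ?thesis using True by simp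
        next
          case False
          then show ?thesis using c by (auto simp: PiE_def extensional_def)
        qed
      qed
      then show "c \<in> ?f ` H" using hH by force
    qed
  qed
  have "card H = card (I \<rightarrow>\<^sub>E (UNIV::bit set))" using card_image[OF inj] img by simp
  also have "\<dots> = 2 ^ card I" using finI by (simp add: card_PiE)
  finally show ?thesis .
qed

abbreviation piv :: "nat set \<Rightarrow> nat \<Rightarrow> nat" where
  "piv I j \<equiv> sorted_list_of_set I ! j"

lemma piv_less: "finite I \<Longrightarrow> j < j' \<Longrightarrow> j' < card I \<Longrightarrow> piv I j < piv I j'"
  by (metis length_sorted_list_of_set sorted_wrt_nth_less strict_sorted_list_of_set)

lemma piv_le: "finite I \<Longrightarrow> j \<le> j' \<Longrightarrow> j' < card I \<Longrightarrow> piv I j \<le> piv I j'"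
  using piv_less[of I j j'] by (cases "j = j'") auto

lemma piv_in: "finite I \<Longrightarrow> j < card I \<Longrightarrow> piv I j \<in> I"
  by (metis length_sorted_list_of_set nth_mem set_sorted_list_of_set)

lemma piv_inj: "finite I \<Longrightarrow> j < card I \<Longrightarrow> j' < card I \<Longrightarrow> piv I j = piv I j' \<longleftrightarrow> j = j'"
  by (metis distinct_sorted_list_of_set length_sorted_list_of_set nth_eq_iff_index_eq)

lemma piv_surj: "finite I \<Longrightarrow> i \<in> I \<Longrightarrow> \<exists>j<card I. piv I j = i"
  by (metis in_set_conv_nth length_sorted_list_of_set set_sorted_list_of_set)

lemma sum_piv: "finite I \<Longrightarrow> (\<Sum>j\<in>{0..<card I}. f (piv I j)) = sum f I"
proof -
  assume fin: "finite I"
  let ?p = "sorted_list_of_set I"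
  have "sum f I = sum f (set ?p)" using fin by simp
  also have "\<dots> = sum_list (map f ?p)" by (simp add: sum_list_distinct_conv_sum_set)
  also have "\<dots> = (\<Sum>j\<in>{0..<length ?p}. map f ?p ! j)" by (simp add: sum_list_sum_nth)
  also have "\<dots> = (\<Sum>j\<in>{0..<card I}. f (piv I j))" by simp
  finally show ?thesis by simp
qed

lemma mv_index: "k < dim_row A \<Longrightarrow> dim_vec x = dim_col A \<Longrightarrow>
   (A *\<^sub>v x) $ k = (\<Sum>j\<in>{0..<dim_col A}. A $$ (k,j) * x $ j)"
  by (simp add: scalar_prod_def)

subsection \<open>Column reduced echelon form\<close>

lemma crrefD:
  assumes "crref m r Hm I"
  shows "Hm \<in> carrier_mat m r" "I \<subseteq> {0..<m}" "card I = r" "finite I"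
    "\<And>j k. j < r \<Longrightarrow> k < r \<Longrightarrow> Hm $$ (piv I j, k) = (if j = k then 1 else 0)"
    "\<And>j i. j < r \<Longrightarrow> i < piv I j \<Longrightarrow> Hm $$ (i, j) = 0"
    "\<And>j. j < r \<Longrightarrow> piv I j < m"
  using assms unfolding crref_def Let_def
  by (auto dest: finite_subset intro: finite_subset)
    (metis atLeastLessThan_iff finite_atLeastLessThan finite_subset piv_in subsetD)

lemma crref_piv:
  assumes C: "crref m r Hm I" and x: "x \<in> carrier_vec r" and j: "j < r"
  shows "(Hm *\<^sub>v x) $ piv I j = x $ j"
proof -
  note D = crrefD[OF C]
  have "(Hm *\<^sub>v x) $ piv I j = (\<Sum>k\<in>{0..<r}. Hm $$ (piv I j, k) * x $ k)"
    using mv_index[of "piv I j" Hm x] D(1) D(7)[OF j] x by auto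
  also have "\<dots> = (\<Sum>k\<in>{0..<r}. x $ k * (if j = k then 1 else 0))"
    by (rule sum.cong) (use D(5)[OF j] in auto)
  also have "\<dots> = x $ j" using sum_delta_bit[of "{0..<r}" "\<lambda>k. x $ k" j] j by simp
  finally show ?thesis .
qed

lemma col_space_carrier:
  assumes "Hm \<in> carrier_mat m r"
  shows "vec_space.col_space m Hm = {Hm *\<^sub>v x |x. x \<in> carrier_vec r}"
  using vec_space.col_space_eq[OF assms] assms by auto

lemma col_space_subsp:
  assumes "Hm \<in> carrier_mat m r"
  shows "subsp m (vec_space.col_space m Hm)"
proof -
  interpret V: vec_space "TYPE(bit)" m .
  show ?thesis unfolding V.col_space_def
    by (rule V.span_is_subspace) (use assms in \<open>auto simp: cols_def\<close>)
qed

lemma ech_fam_crref: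
  assumes W: "subsp m H" and E: "ech_fam m H I v"
  shows "crref m (card I) (mat m (card I) (\<lambda>(k,j). v (piv I j) $ k)) I \<and>
    vec_space.col_space m (mat m (card I) (\<lambda>(k,j). v (piv I j) $ k)) = H"
proof -
  define r where "r = card I"
  define Hm where "Hm = mat m r (\<lambda>(k,j). v (piv I j) $ k)"
  have Im: "I \<subseteq> {0..<m}" using E ech_fam_def by auto
  have finI: "finite I" using Im finite_subset by blast
  have vH: "v i \<in> H" if "i \<in> I" for i using E that ech_fam_def by auto
  have vd: "v i $ i' = (if i' = i then 1 else 0)" if "i \<in> I" "i' \<in> I" for i i'
    using E that unfolding ech_fam_def by auto
  have vb: "v i $ k = 0" if "i \<in> I" "k < i" for i k
    using E that unfolding ech_fam_def by auto
  have sp: "h = vec m (\<lambda>k. \<Sum>i\<in>I. h $ i * v i $ k)" if "h \<in> H" for h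
    using E that unfolding ech_fam_def by auto
  have pm: "piv I j < m" if "j < r" for j
  proof -
    have "piv I j \<in> I" using piv_in[OF finI] that r_def by auto
    then show ?thesis using Im by auto
  qed
  have Hc: "Hm \<in> carrier_mat m r" unfolding Hm_def by auto
  have "crref m r Hm I"
    unfolding crref_def Let_def
  proof (intro conjI allI impI)
    show "Hm \<in> carrier_mat m r" using Hc .
    show "I \<subseteq> {0..<m}" using Im .
    show "card I = r" using r_def by simp
    fix j assume j: "j < r"
    show "Hm $$ (piv I j, k) = (if j = k then 1 else 0)" if "k < r" for k
      using pm[OF j] j that vd piv_in[OF finI] piv_inj[OF finI] r_def unfolding Hm_def by auto
    show "Hm $$ (i, j) = 0" if "i < piv I j" for i
      using pm[OF j] j that vb piv_in[OF finI] r_def unfolding Hm_def by auto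
  qed
  moreover have "vec_space.col_space m Hm = H"
  proof -
    have "Hm *\<^sub>v x \<in> H" if x: "x \<in> carrier_vec r" for x
    proof -
      have "Hm *\<^sub>v x = vec m (\<lambda>k. \<Sum>j\<in>{0..<r}. x $ j * v (piv I j) $ k)"
        using x unfolding Hm_def by (intro eq_vecI) (auto simp: scalar_prod_def mult.commute intro!: sum.cong)
      also have "\<dots> \<in> H" by (rule subsp_sum[OF W]) (use vH piv_in[OF finI] r_def in auto)
      finally show ?thesis .
    qed
    moreover have "h \<in> {Hm *\<^sub>v x |x. x \<in> carrier_vec r}" if h: "h \<in> H" for h
    proof -
      define x where "x = vec r (\<lambda>j. h $ piv I j)"
      have "Hm *\<^sub>v x = vec m (\<lambda>k. \<Sum>j\<in>{0..<card I}. (\<lambda>i. h $ i * v i $ k) (piv I j))"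
        unfolding Hm_def x_def r_def by (intro eq_vecI) (auto simp: scalar_prod_def mult.commute intro!: sum.cong)
      also have "\<dots> = vec m (\<lambda>k. \<Sum>i\<in>I. h $ i * v i $ k)"
        using sum_piv[OF finI, of "\<lambda>i. h $ i * v i $ _"] by simp
      also have "\<dots> = h" using sp[OF h] by simp
      finally have "Hm *\<^sub>v x = h" .
      moreover have "x \<in> carrier_vec r" unfolding x_def by simp
      ultimately show ?thesis by blast
    qed
    ultimately show ?thesis using col_space_carrier[OF Hc] by auto
  qed
  ultimately show ?thesis unfolding Hm_def r_def by simp
qed

definition lead :: "nat \<Rightarrow> bit vec set \<Rightarrow> nat set" where
  "lead m H = {i. i < m \<and> (\<exists>h\<in>H. h $ i = 1 \<and> (\<forall>k<i. h $ k = 0))}"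

lemma crref_col:
  assumes C: "crref m r Hm I" and j: "j < r" and k: "k < m"
  shows "(Hm *\<^sub>v unit_vec r j) $ k = Hm $$ (k, j)"
  using crrefD(1)[OF C] j k by simp

lemma crref_lead:
  assumes C: "crref m r Hm I"
  shows "lead m (vec_space.col_space m Hm) = I"
proof -
  note D = crrefD[OF C]
  have cs: "vec_space.col_space m Hm = {Hm *\<^sub>v x |x. x \<in> carrier_vec r}"
    using col_space_carrier[OF D(1)] .
  show ?thesis
  proof
    show "I \<subseteq> lead m (vec_space.col_space m Hm)"
    proof
      fix i assume i: "i \<in> I"
      obtain j where j: "j < r" and ij: "piv I j = i" using piv_surj[OF D(4) i] D(3) by auto
      have "Hm *\<^sub>v unit_vec r j \<in> vec_space.col_space m Hm" using cs by auto
      moreover have "(Hm *\<^sub>v unit_vec r j) $ i = 1"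
        using crref_piv[OF C _ j, of "unit_vec r j"] ij j by simp
      moreover have "(Hm *\<^sub>v unit_vec r j) $ k = 0" if "k < i" for k
        using crref_col[OF C j, of k] D(6)[OF j, of k] D(7)[OF j] that ij by simp
      ultimately show "i \<in> lead m (vec_space.col_space m Hm)"
        unfolding lead_def using D(7)[OF j] ij by blast
    qed
    show "lead m (vec_space.col_space m Hm) \<subseteq> I"
    proof
      fix i assume "i \<in> lead m (vec_space.col_space m Hm)"
      then obtain x where im: "i < m" and x: "x \<in> carrier_vec r" and hi: "(Hm *\<^sub>v x) $ i = 1"
        and hb: "\<And>k. k < i \<Longrightarrow> (Hm *\<^sub>v x) $ k = 0"
        unfolding lead_def cs by auto
      have "\<exists>j<r. x $ j = 1"
      proof (rule ccontr)
        assume "\<not> ?thesis"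
        then have "\<And>j. j < r \<Longrightarrow> x $ j = 0" using bit_eq_0_or_1 by blast
        then have "(Hm *\<^sub>v x) $ i = 0" using im x D(1) by (auto simp: scalar_prod_def intro!: sum.neutral)
        then show False using hi by simp
      qed
      define j0 where "j0 = (LEAST j. j < r \<and> x $ j = 1)"
      have j0: "j0 < r" "x $ j0 = 1" using LeastI_ex[OF \<open>\<exists>j<r. x $ j = 1\<close>] unfolding j0_def by auto
      have xb: "x $ j = 0" if "j < j0" for j
        using not_less_Least[of j "\<lambda>j. j < r \<and> x $ j = 1"] that j0 bit_eq_0_or_1[of "x $ j"]
        unfolding j0_def by auto
      have v1: "(Hm *\<^sub>v x) $ piv I j0 = 1" using crref_piv[OF C x j0(1)] j0 by simp
      have v0: "(Hm *\<^sub>v x) $ k = 0" if "k < piv I j0" for k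
      proof -
        have km: "k < m" using that D(7)[OF j0(1)] by simp
        have "(Hm *\<^sub>v x) $ k = (\<Sum>j\<in>{0..<r}. Hm $$ (k, j) * x $ j)"
          using mv_index[of k Hm x] km D(1) x by auto
        also have "\<dots> = 0"
        proof (rule sum.neutral, rule ballI)
          fix j assume "j \<in> {0..<r}"
          then have jr: "j < r" by simp
          show "Hm $$ (k, j) * x $ j = 0"
          proof (cases "j < j0")
            case True then show ?thesis using xb by simp
          next
            case False
            then have "piv I j0 \<le> piv I j" using piv_le[OF D(4), of j0 j] jr D(3) by simp
            then show ?thesis using D(6)[OF jr, of k] that by simp
          qed
        qed
        finally show ?thesis .
      qed
      have "i = piv I j0"
      proof (rule ccontr)
        assume "i \<noteq> piv I j0"
        then consider "i < piv I j0" | "piv I j0 < i" by linarith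
        then show False
        proof cases
          case 1 then show ?thesis using v0 hi by simp
        next
          case 2 then show ?thesis using hb v1 by simp
        qed
      qed
      then show "i \<in> I" using piv_in[OF D(4)] j0 D(3) by simp
    qed
  qed
qed

lemma crref_unique:
  assumes C: "crref m r Hm I" and C': "crref m r Hm' I'"
    and eq: "vec_space.col_space m Hm = vec_space.col_space m Hm'"
  shows "Hm = Hm' \<and> I = I'"
proof -
  have II: "I = I'" using crref_lead[OF C] crref_lead[OF C'] eq by simp
  note D = crrefD[OF C] and D' = crrefD[OF C']
  have cs: "vec_space.col_space m Hm = {Hm *\<^sub>v x |x. x \<in> carrier_vec r}"
    using col_space_carrier[OF D(1)] .
  have cs': "vec_space.col_space m Hm' = {Hm' *\<^sub>v x |x. x \<in> carrier_vec r}"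
    using col_space_carrier[OF D'(1)] .
  have "Hm = Hm'"
  proof (rule eq_matI)
    show "dim_row Hm = dim_row Hm'" "dim_col Hm = dim_col Hm'" using D(1) D'(1) by auto
    fix k j assume k: "k < dim_row Hm'" and j: "j < dim_col Hm'"
    then have km: "k < m" and jr: "j < r" using D'(1) by auto
    have "Hm' *\<^sub>v unit_vec r j \<in> vec_space.col_space m Hm" using cs' eq by auto
    then obtain x where x: "x \<in> carrier_vec r" and hx: "Hm *\<^sub>v x = Hm' *\<^sub>v unit_vec r j"
      using cs by auto
    have "x = unit_vec r j"
    proof (rule eq_vecI)
      show "dim_vec x = dim_vec (unit_vec r j)" using x by simp
      fix l assume "l < dim_vec (unit_vec r j)"
      then have l: "l < r" by simp
      have "x $ l = (Hm *\<^sub>v x) $ piv I l" using crref_piv[OF C x l] by simp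
      also have "\<dots> = (Hm' *\<^sub>v unit_vec r j) $ piv I' l" using hx II by simp
      also have "\<dots> = unit_vec r j $ l" using crref_piv[OF C' _ l, of "unit_vec r j"] by simp
      finally show "x $ l = unit_vec r j $ l" .
    qed
    then have "Hm *\<^sub>v unit_vec r j = Hm' *\<^sub>v unit_vec r j" using hx by simp
    then show "Hm $$ (k, j) = Hm' $$ (k, j)"
      using crref_col[OF C jr km] crref_col[OF C' jr km] by simp
  qed
  then show ?thesis using II by simp
qed

lemma grass_iff: "H \<in> grass m r \<longleftrightarrow> subsp m H \<and> dimS m H = r"
  unfolding grass_def dimS_def by auto

lemma grass_card: "H \<in> grass m r \<Longrightarrow> card H = 2 ^ r"
  using grass_iff subsp_card_dim by metis

lemma crref_exists:
  assumes "H \<in> grass m r"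
  shows "\<exists>Hm I. crref m r Hm I \<and> vec_space.col_space m Hm = H"
proof -
  have W: "subsp m H" and d: "dimS m H = r" using assms grass_iff by auto
  obtain I v where E: "ech_fam m H I v" using ech_fam_exists[OF W] by blast
  have "(2::nat) ^ card I = 2 ^ r" using ech_fam_card[OF W E] subsp_card_dim[OF W] d by simp
  then have "card I = r" by simp
  then show ?thesis using ech_fam_crref[OF W E] by metis
qed

lemma echelon_props:
  assumes "H \<in> grass m r"
  shows "crref m r (fst (echelon m r H)) (snd (echelon m r H)) \<and>
         vec_space.col_space m (fst (echelon m r H)) = H"
proof -
  obtain Hm I where C: "crref m r Hm I" and cs: "vec_space.col_space m Hm = H"
    using crref_exists[OF assms] by blast
  have "echelon m r H = (Hm, I)"
    unfolding echelon_def
  proof (rule the_equality)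
    show "case (Hm, I) of (Hm, I) \<Rightarrow> crref m r Hm I \<and> vec_space.col_space m Hm = H"
      using C cs by simp
    fix z assume "case z of (Hm, I) \<Rightarrow> crref m r Hm I \<and> vec_space.col_space m Hm = H"
    then show "z = (Hm, I)" using crref_unique[OF C] cs by (cases z) auto
  qed
  then show ?thesis using C cs by simp
qed

lemma crref_grass:
  assumes C: "crref m r Hm I"
  shows "vec_space.col_space m Hm \<in> grass m r"
proof -
  note D = crrefD[OF C]
  have W: "subsp m (vec_space.col_space m Hm)" using col_space_subsp[OF D(1)] .
  have cs: "vec_space.col_space m Hm = (\<lambda>x. Hm *\<^sub>v x) ` carrier_vec r"
    using col_space_carrier[OF D(1)] by auto
  have inj: "inj_on (\<lambda>x. Hm *\<^sub>v x) (carrier_vec r)"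
  proof (rule inj_onI)
    fix x y assume x: "x \<in> carrier_vec r" and y: "y \<in> carrier_vec r" and eq: "Hm *\<^sub>v x = Hm *\<^sub>v y"
    show "x = y"
    proof (rule eq_vecI)
      show "dim_vec x = dim_vec y" using x y by simp
      fix j assume "j < dim_vec y"
      then have j: "j < r" using y by simp
      show "x $ j = y $ j" using crref_piv[OF C x j] crref_piv[OF C y j] eq by simp
    qed
  qed
  have "card (vec_space.col_space m Hm) = 2 ^ r"
    using card_image[OF inj] cs card_carrier_vec_bit by simp
  then have "(2::nat) ^ dimS m (vec_space.col_space m Hm) = 2 ^ r" using subsp_card_dim[OF W] by simp
  then show ?thesis using W grass_iff by simp
qed



definition Pm :: "nat \<Rightarrow> nat \<Rightarrow> bit mat \<Rightarrow> nat set \<Rightarrow> bit mat" where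
  "Pm m r Hm I = mat_of_cols m (cols Hm @ map (unit_vec m) (sorted_list_of_set ({0..<m} - I)))"

lemma P_mat_eq: "P_mat m r H = Pm m r (fst (echelon m r H)) (snd (echelon m r H))"
  by (simp add: P_mat_def Pm_def split: prod.split)

lemma sum_split_at:
  fixes r m :: nat
  assumes "r \<le> m"
  shows "(\<Sum>j\<in>{0..<m}. f j) = (\<Sum>j\<in>{0..<r}. f j) + (\<Sum>t\<in>{0..<m-r}. f (r + t))"
proof -
  have "{0..<m} = {0..<r} \<union> {r..<m}" using assms by (auto simp: ivl_disj_un)
  then have "(\<Sum>j\<in>{0..<m}. f j) = (\<Sum>j\<in>{0..<r}. f j) + (\<Sum>j\<in>{r..<m}. f j)"
    by (simp add: sum.union_disjoint)
  moreover have "(\<Sum>j\<in>{r..<m}. f j) = (\<Sum>t\<in>{0..<m-r}. f (r + t))"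
    using sum.shift_bounds_nat_ivl[of f 0 r "m-r"] assms by (simp add: add.commute)
  ultimately show ?thesis by simp
qed

context
  fixes m r Hm I
  assumes C: "crref m r Hm I"
begin

abbreviation "J \<equiv> {0..<m} - I"

lemma rm: "r \<le> m"
proof -
  have "card I \<le> card {0..<m}" using crrefD(2)[OF C] by (intro card_mono) auto
  then show ?thesis using crrefD(3)[OF C] by simp
qed

lemma cardJ: "card J = m - r"
  using crrefD(2,3)[OF C] by (simp add: card_Diff_subset crrefD(4)[OF C])

lemma finJ: "finite J" by simp

lemma Pm_carrier: "Pm m r Hm I \<in> carrier_mat m m"
proof -
  have "length (cols Hm @ map (unit_vec m) (sorted_list_of_set J)) = m"
    using crrefD(1)[OF C] cardJ rm by simp
  then show ?thesis unfolding Pm_def by (metis mat_of_cols_carrier(1))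
qed

lemma Pm_index:
  assumes k: "k < m" and j: "j < m"
  shows "Pm m r Hm I $$ (k,j) = (if j < r then Hm $$ (k,j) else (if k = piv J (j - r) then 1 else 0))"
proof -
  have len: "length (cols Hm @ map (unit_vec m) (sorted_list_of_set J)) = m"
    using crrefD(1)[OF C] cardJ rm by simp
  have "Pm m r Hm I $$ (k,j) = (cols Hm @ map (unit_vec m) (sorted_list_of_set J)) ! j $ k"
    unfolding Pm_def using mat_of_cols_index[OF k, of j "cols Hm @ map (unit_vec m) (sorted_list_of_set J)"] len j by simp
  also have "\<dots> = (if j < r then Hm $$ (k,j) else (if k = piv J (j - r) then 1 else 0))"
  proof (cases "j < r")
    case True
    then show ?thesis using crrefD(1)[OF C] k by (simp add: nth_append)
  next
    case False
    then have "j - r < length (sorted_list_of_set J)" using j cardJ by simp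
    then show ?thesis using False crrefD(1)[OF C] k by (simp add: nth_append unit_vec_def)
  qed
  finally show ?thesis .
qed

lemma Pm_mv:
  assumes k: "k < m" and x: "x \<in> carrier_vec m"
  shows "(Pm m r Hm I *\<^sub>v x) $ k = (\<Sum>j\<in>{0..<r}. Hm $$ (k,j) * x $ j) +
     (\<Sum>t\<in>{0..<m-r}. (if k = piv J t then 1 else 0) * x $ (r + t))"
proof -
  have "(Pm m r Hm I *\<^sub>v x) $ k = (\<Sum>j\<in>{0..<m}. Pm m r Hm I $$ (k,j) * x $ j)"
    using mv_index[of k "Pm m r Hm I" x] Pm_carrier k x by auto
  also have "\<dots> = (\<Sum>j\<in>{0..<r}. Pm m r Hm I $$ (k,j) * x $ j) +
     (\<Sum>t\<in>{0..<m-r}. Pm m r Hm I $$ (k,r+t) * x $ (r+t))"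
    by (rule sum_split_at[OF rm])
  also have "\<dots> = (\<Sum>j\<in>{0..<r}. Hm $$ (k,j) * x $ j) +
     (\<Sum>t\<in>{0..<m-r}. (if k = piv J t then 1 else 0) * x $ (r + t))"
    using Pm_index k rm by (intro arg_cong2[where f = "(+)"] sum.cong) auto
  finally show ?thesis .
qed

lemma Pm_kernel:
  assumes x: "x \<in> carrier_vec m" and z: "Pm m r Hm I *\<^sub>v x = 0\<^sub>v m"
  shows "x = 0\<^sub>v m"
proof -
  note D = crrefD[OF C]
  have pivJ: "piv J t \<in> J" if "t < m - r" for t using piv_in[OF finJ] that cardJ by simp
  have x1: "x $ l = 0" if l: "l < r" for l
  proof -
    have "0 = (Pm m r Hm I *\<^sub>v x) $ piv I l" using z D(7)[OF l] by simp
    also have "\<dots> = (\<Sum>j\<in>{0..<r}. Hm $$ (piv I l,j) * x $ j)"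
      using Pm_mv[OF D(7)[OF l] x] pivJ piv_in[OF D(4), of l] l D(3) by (auto intro!: sum.neutral)
    also have "\<dots> = (\<Sum>j\<in>{0..<r}. x $ j * (if l = j then 1 else 0))"
      by (rule sum.cong) (use D(5)[OF l] in auto)
    also have "\<dots> = x $ l" using sum_delta_bit[of "{0..<r}" "\<lambda>j. x $ j" l] l by simp
    finally show ?thesis by simp
  qed
  have x2: "x $ (r + t) = 0" if t: "t < m - r" for t
  proof -
    have km: "piv J t < m" using pivJ[OF t] by auto
    have "0 = (Pm m r Hm I *\<^sub>v x) $ piv J t" using z km by simp
    also have "\<dots> = (\<Sum>s\<in>{0..<m-r}. x $ (r + s) * (if t = s then 1 else 0))"
      using Pm_mv[OF km x] x1 piv_inj[OF finJ, of t] t cardJ by (auto intro!: sum.cong)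
    also have "\<dots> = x $ (r + t)" using sum_delta_bit[of "{0..<m-r}" "\<lambda>s. x $ (r + s)" t] t by simp
    finally show ?thesis by simp
  qed
  show ?thesis
  proof (rule eq_vecI)
    show "dim_vec x = dim_vec (0\<^sub>v m)" using x by simp
    fix i assume "i < dim_vec (0\<^sub>v m)"
    then have i: "i < m" by simp
    show "x $ i = 0\<^sub>v m $ i"
    proof (cases "i < r")
      case True then show ?thesis using x1 i by simp
    next
      case False
      then have "i = r + (i - r)" "i - r < m - r" using i by auto
      then show ?thesis using x2[of "i - r"] i by simp
    qed
  qed
qed

lemma Pm_invertible: "\<exists>B. B \<in> carrier_mat m m \<and> Pm m r Hm I * B = 1\<^sub>m m \<and> B * Pm m r Hm I = 1\<^sub>m m"
proof -
  have "det (Pm m r Hm I) \<noteq> 0"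
    using det_0_iff_vec_prod_zero[OF Pm_carrier] Pm_kernel by blast
  from det_non_zero_imp_unit[OF Pm_carrier this, where b = "()"]
  show ?thesis unfolding Units_def ring_mat_def by auto
qed

lemma mat_inv_Pm:
  "mat_inv m (Pm m r Hm I) \<in> carrier_mat m m \<and> Pm m r Hm I * mat_inv m (Pm m r Hm I) = 1\<^sub>m m
   \<and> mat_inv m (Pm m r Hm I) * Pm m r Hm I = 1\<^sub>m m"
  unfolding mat_inv_def by (rule someI_ex) (rule Pm_invertible)

end



lemma diag_mv:
  assumes y: "y \<in> carrier_vec m" and i: "i < m"
  shows "(mat m m (\<lambda>(i,j). if i = j \<and> Q i then 1 else 0) *\<^sub>v y) $ i = (if Q i then y $ i else (0::bit))"
proof -
  have "(mat m m (\<lambda>(i,j). if i = j \<and> Q i then 1 else 0) *\<^sub>v y) $ i =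
     (\<Sum>j\<in>{0..<m}. (if i = j \<and> Q i then 1 else 0) * y $ j)"
    using mv_index[of i "mat m m (\<lambda>(i,j). if i = j \<and> Q i then 1 else 0)" y] y i by auto
  also have "\<dots> = (\<Sum>j\<in>{0..<m}. if i = j then (if Q i then y $ i else 0) else 0)"
    by (rule sum.cong) auto
  also have "\<dots> = (if Q i then y $ i else 0)" using i by simp
  finally show ?thesis .
qed

lemma I_lower_diag: "I_lower m r = mat m m (\<lambda>(i,j). if i = j \<and> \<not> i < r then 1 else 0)"
  unfolding I_lower_def I_upper_def by (intro eq_matI) auto

lemma dims_special[simp]: "dim_row (embed_sym m S) = m" "dim_col (embed_sym m S) = m"
  "dim_row (I_upper m r) = m" "dim_col (I_upper m r) = m"
  "dim_row (I_lower m r) = m" "dim_col (I_lower m r) = m"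
  unfolding embed_sym_def I_lower_def I_upper_def by auto

lemma U_mv: "y \<in> carrier_vec m \<Longrightarrow> i < m \<Longrightarrow> (I_upper m r *\<^sub>v y) $ i = (if i < r then y $ i else 0)"
  unfolding I_upper_def by (rule diag_mv)

lemma Lo_mv: "y \<in> carrier_vec m \<Longrightarrow> i < m \<Longrightarrow> (I_lower m r *\<^sub>v y) $ i = (if i < r then 0 else y $ i)"
  unfolding I_lower_diag using diag_mv[of y m i "\<lambda>i. \<not> i < r"] by auto

lemma U_carrier[simp]: "I_upper m r \<in> carrier_mat m m" unfolding I_upper_def by auto
lemma Lo_carrier[simp]: "I_lower m r \<in> carrier_mat m m" unfolding I_lower_diag by auto
lemma St_carrier[simp]: "embed_sym m S \<in> carrier_mat m m" unfolding embed_sym_def by auto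

lemma U_T[simp]: "transpose_mat (I_upper m r) = I_upper m r"
  unfolding I_upper_def by (intro eq_matI) auto
lemma Lo_T[simp]: "transpose_mat (I_lower m r) = I_lower m r"
  unfolding I_lower_diag by (intro eq_matI) auto
lemma St_T: "S \<in> sym_mats r \<Longrightarrow> transpose_mat (embed_sym m S) = embed_sym m S"
  unfolding embed_sym_def sym_mats_def
  by (intro eq_matI) (auto, metis carrier_matD index_transpose_mat(1))

lemma St_mv:
  assumes S: "S \<in> carrier_mat r r" and w: "w \<in> carrier_vec m" and i: "i < m" and rm: "r \<le> m"
  shows "(embed_sym m S *\<^sub>v w) $ i = (if i < r then (\<Sum>j\<in>{0..<r}. S $$ (i,j) * w $ j) else 0)"
proof -
  have "(embed_sym m S *\<^sub>v w) $ i = (\<Sum>j\<in>{0..<m}. embed_sym m S $$ (i,j) * w $ j)"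
    using mv_index[of i "embed_sym m S" w] w i by auto
  also have "\<dots> = (\<Sum>j\<in>{0..<r}. embed_sym m S $$ (i,j) * w $ j) +
      (\<Sum>t\<in>{0..<m-r}. embed_sym m S $$ (i,r+t) * w $ (r+t))"
    by (rule sum_split_at[OF rm])
  also have "\<dots> = (if i < r then (\<Sum>j\<in>{0..<r}. S $$ (i,j) * w $ j) else 0)"
    using S i rm unfolding embed_sym_def by (auto intro!: sum.neutral)
  finally show ?thesis .
qed

lemma scalar_prod_split_lower:
  assumes y: "y \<in> carrier_vec m" and y': "y' \<in> carrier_vec m"
  shows "(I_lower m r *\<^sub>v y) \<bullet> (I_upper m r *\<^sub>v y') = 0"
proof -
  have "(I_lower m r *\<^sub>v y) \<bullet> (I_upper m r *\<^sub>v y') = (\<Sum>i\<in>{0..<m}. (I_lower m r *\<^sub>v y) $ i * (I_upper m r *\<^sub>v y') $ i)"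
    unfolding scalar_prod_def by simp
  also have "\<dots> = 0"
  proof (rule sum.neutral, rule ballI)
    fix i assume "i \<in> {0..<m}"
    then have i: "i < m" by simp
    show "(I_lower m r *\<^sub>v y) $ i * (I_upper m r *\<^sub>v y') $ i = 0"
      by (cases "i < r") (simp_all del: index_mult_mat_vec add: U_mv[OF y' i] Lo_mv[OF y i])
  qed
  finally show ?thesis .
qed

locale trip =
  fixes m r H S
  assumes HG: "H \<in> grass m r" and SS: "S \<in> sym_mats r"
begin

definition "Hm = fst (echelon m r H)"
definition "I = snd (echelon m r H)"
definition "P = P_mat m r H"
definition "Pinv = mat_inv m P"
definition "U = I_upper m r"
definition "Lo = I_lower m r"
definition "St = embed_sym m S"
definition "A = U * transpose_mat P"
definition "B = (U * St + Lo) * Pinv"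
definition "M = hconcat A B"

lemma C: "crref m r Hm I" and cs: "vec_space.col_space m Hm = H"
  using echelon_props[OF HG] unfolding Hm_def I_def by auto

lemma rm: "r \<le> m" using rm[OF C] .

lemma P_eq: "P = Pm m r Hm I" unfolding P_def Hm_def I_def P_mat_eq ..

lemma PC[simp]: "P \<in> carrier_mat m m" using Pm_carrier[OF C] P_eq by simp
lemma PinvC[simp]: "Pinv \<in> carrier_mat m m" and PPinv: "P * Pinv = 1\<^sub>m m" and PinvP: "Pinv * P = 1\<^sub>m m"
  using mat_inv_Pm[OF C] P_eq Pinv_def by auto

lemma UC[simp]: "U \<in> carrier_mat m m" and LoC[simp]: "Lo \<in> carrier_mat m m"
  and StC[simp]: "St \<in> carrier_mat m m"
  unfolding U_def Lo_def St_def by auto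

lemma SC: "S \<in> carrier_mat r r" using SS sym_mats_def by auto

lemma StT: "transpose_mat St = St" unfolding St_def using St_T[OF SS] .

lemma AC[simp]: "A \<in> carrier_mat m m"
  unfolding A_def using mult_carrier_mat[OF UC, of "transpose_mat P" m] by simp
lemma USC[simp]: "U * St \<in> carrier_mat m m" using mult_carrier_mat[OF UC StC] .
lemma USLC[simp]: "U * St + Lo \<in> carrier_mat m m" by simp
lemma SULC[simp]: "St * U + Lo \<in> carrier_mat m m" using mult_carrier_mat[OF StC UC] by simp
lemma BC[simp]: "B \<in> carrier_mat m m"
  unfolding B_def using mult_carrier_mat[OF USLC PinvC] .

lemma dims[simp]: "dim_row A = m" "dim_col A = m" "dim_row B = m" "dim_col B = m"
  "dim_row P = m" "dim_col P = m" "dim_row Pinv = m" "dim_col Pinv = m"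
  "dim_row U = m" "dim_col U = m" "dim_row Lo = m" "dim_col Lo = m"
  "dim_row St = m" "dim_col St = m"
  using AC BC PC PinvC UC LoC StC by (simp_all only: carrier_matD)

lemma MC: "M \<in> carrier_mat m (2*m)"
proof -
  have "dim_row A = m" "dim_col A = m" "dim_col B = m" using AC BC by auto
  then show ?thesis unfolding M_def hconcat_def carrier_mat_def by auto
qed

lemma vcarr[simp]: "y \<in> carrier_vec m \<Longrightarrow> U *\<^sub>v y \<in> carrier_vec m"
  "y \<in> carrier_vec m \<Longrightarrow> Lo *\<^sub>v y \<in> carrier_vec m"
  "y \<in> carrier_vec m \<Longrightarrow> St *\<^sub>v y \<in> carrier_vec m"
  "y \<in> carrier_vec m \<Longrightarrow> P *\<^sub>v y \<in> carrier_vec m"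
  "y \<in> carrier_vec m \<Longrightarrow> Pinv *\<^sub>v y \<in> carrier_vec m"
  "y \<in> carrier_vec m \<Longrightarrow> transpose_mat P *\<^sub>v y \<in> carrier_vec m"
  "y \<in> carrier_vec m \<Longrightarrow> transpose_mat Pinv *\<^sub>v y \<in> carrier_vec m"
  by (auto intro: mult_mat_vec_carrier[of _ m m])

lemma dimM[simp]: "dim_row M = m" "dim_col M = 2*m" using MC by (simp_all only: carrier_matD)

lemma MT_mv:
  assumes y: "y \<in> carrier_vec m" and i: "i < 2*m"
  shows "(transpose_mat M *\<^sub>v y) $ i = (if i < m then (transpose_mat A *\<^sub>v y) $ i else (transpose_mat B *\<^sub>v y) $ (i - m))"
proof -
  have "(transpose_mat M *\<^sub>v y) $ i = (\<Sum>k\<in>{0..<m}. M $$ (k,i) * y $ k)"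
    using mv_index[of i "transpose_mat M" y] MC y i by auto
  also have "\<dots> = (if i < m then (\<Sum>k\<in>{0..<m}. A $$ (k,i) * y $ k) else (\<Sum>k\<in>{0..<m}. B $$ (k,i-m) * y $ k))"
    unfolding M_def hconcat_def using AC BC i by (auto simp: carrier_matD intro!: sum.cong)
  also have "\<dots> = (if i < m then (transpose_mat A *\<^sub>v y) $ i else (transpose_mat B *\<^sub>v y) $ (i - m))"
    using mv_index[of i "transpose_mat A" y] mv_index[of "i-m" "transpose_mat B" y] y i AC BC by auto
  finally show ?thesis .
qed

lemma MT_first: "y \<in> carrier_vec m \<Longrightarrow> vec_first (transpose_mat M *\<^sub>v y) m = transpose_mat A *\<^sub>v y"
proof (rule eq_vecI)
  fix i assume y: "y \<in> carrier_vec m" and "i < dim_vec (transpose_mat A *\<^sub>v y)"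
  then have i: "i < m" by simp
  show "vec_first (transpose_mat M *\<^sub>v y) m $ i = (transpose_mat A *\<^sub>v y) $ i"
    using MT_mv[OF y, of i] i by (simp add: vec_first_def del: index_mult_mat_vec)
qed simp

lemma MT_dim: "dim_vec (transpose_mat M *\<^sub>v y) = 2 * m" using MC by auto

lemma MT_last: "y \<in> carrier_vec m \<Longrightarrow> vec_last (transpose_mat M *\<^sub>v y) m = transpose_mat B *\<^sub>v y"
proof (rule eq_vecI)
  fix i assume y: "y \<in> carrier_vec m" and "i < dim_vec (transpose_mat B *\<^sub>v y)"
  then have i: "i < m" by simp
  show "vec_last (transpose_mat M *\<^sub>v y) m $ i = (transpose_mat B *\<^sub>v y) $ i"
    using MT_mv[OF y, of "m + i"] i by (simp add: vec_last_def MT_dim del: index_mult_mat_vec)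
qed simp

lemma AT: "transpose_mat A = P * U"
  unfolding A_def using transpose_mult[OF UC, of "transpose_mat P" m] U_def by simp

lemma BT: "transpose_mat B = transpose_mat Pinv * (St * U + Lo)"
proof -
  have "transpose_mat B = transpose_mat Pinv * transpose_mat (U * St + Lo)"
    unfolding B_def by (rule transpose_mult[of "U * St + Lo" m m Pinv m]) auto
  also have "transpose_mat (U * St + Lo) = transpose_mat (U * St) + transpose_mat Lo"
    by (rule transpose_add[of _ m m]) auto
  also have "transpose_mat (U * St) = St * U"
    using transpose_mult[OF UC StC] StT U_def by simp
  also have "transpose_mat Lo = Lo" unfolding Lo_def by simp
  finally show ?thesis .
qed

lemma F: "y \<in> carrier_vec m \<Longrightarrow> vec_first (transpose_mat M *\<^sub>v y) m = P *\<^sub>v (U *\<^sub>v y)"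
  using MT_first AT assoc_mult_mat_vec[OF PC UC] by simp

lemma G: "y \<in> carrier_vec m \<Longrightarrow> transpose_mat P *\<^sub>v vec_last (transpose_mat M *\<^sub>v y) m = St *\<^sub>v (U *\<^sub>v y) + Lo *\<^sub>v y"
proof -
  assume y: "y \<in> carrier_vec m"
  have "transpose_mat P * transpose_mat Pinv = transpose_mat (Pinv * P)"
    by (rule transpose_mult[OF PinvC PC, symmetric])
  then have PP: "transpose_mat P * transpose_mat Pinv = 1\<^sub>m m" using PinvP by simp
  have "transpose_mat P *\<^sub>v vec_last (transpose_mat M *\<^sub>v y) m
      = transpose_mat P *\<^sub>v (transpose_mat Pinv *\<^sub>v ((St * U + Lo) *\<^sub>v y))"
    using MT_last[OF y] BT y assoc_mult_mat_vec[of "transpose_mat Pinv" m m "St * U + Lo" m y] by simp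
  also have "\<dots> = (transpose_mat P * transpose_mat Pinv) *\<^sub>v ((St * U + Lo) *\<^sub>v y)"
    using y by (subst assoc_mult_mat_vec[of _ m m]) (auto intro: mult_mat_vec_carrier[OF SULC])
  also have "\<dots> = (St * U + Lo) *\<^sub>v y" using PP y one_mult_mat_vec mult_mat_vec_carrier[OF SULC y] by simp
  also have "\<dots> = St *\<^sub>v (U *\<^sub>v y) + Lo *\<^sub>v y"
    using y add_mult_distrib_mat_vec[of "St * U" m m Lo y] assoc_mult_mat_vec[OF StC UC y]
    by (simp add: mult_carrier_mat[OF StC UC])
  finally show ?thesis .
qed


lemma RS: "vec_space.row_space (2*m) M = (\<lambda>y. transpose_mat M *\<^sub>v y) ` carrier_vec m"
  using vec_space.row_space_eq[OF MC] MC by auto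

lemma RS_subsp: "subsp (2*m) (vec_space.row_space (2*m) M)"
proof -
  interpret V: vec_space "TYPE(bit)" "2*m" .
  show ?thesis unfolding V.row_space_def
    by (rule V.span_is_subspace) (use MC in \<open>auto simp: rows_def\<close>)
qed

lemma lag_eq: "lag_map m (r, H, S) = vec_space.row_space (2*m) M"
  unfolding lag_map_def M_def A_def B_def U_def Lo_def St_def Pinv_def P_def Let_def prod.case ..

lemma Pinv_cancel: "w \<in> carrier_vec m \<Longrightarrow> Pinv *\<^sub>v (P *\<^sub>v w) = w"
  using assoc_mult_mat_vec[OF PinvC PC, of w, symmetric] PinvP by simp

lemma PT_cancel: "w \<in> carrier_vec m \<Longrightarrow> transpose_mat Pinv *\<^sub>v (transpose_mat P *\<^sub>v w) = w"
proof -
  assume w: "w \<in> carrier_vec m"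
  have "transpose_mat Pinv * transpose_mat P = transpose_mat (P * Pinv)"
    by (rule transpose_mult[OF PC PinvC, symmetric])
  then have "transpose_mat Pinv * transpose_mat P = 1\<^sub>m m" using PPinv by simp
  then show ?thesis using assoc_mult_mat_vec[of "transpose_mat Pinv" m m "transpose_mat P" m w] w by simp
qed

lemma MT_inj: "inj_on (\<lambda>y. transpose_mat M *\<^sub>v y) (carrier_vec m)"
proof (rule inj_onI)
  fix y y' assume y: "y \<in> carrier_vec m" and y': "y' \<in> carrier_vec m"
    and eq: "transpose_mat M *\<^sub>v y = transpose_mat M *\<^sub>v y'"
  have 1: "P *\<^sub>v (U *\<^sub>v y) = P *\<^sub>v (U *\<^sub>v y')" using F[OF y] F[OF y'] eq by metis
  have "U *\<^sub>v y = Pinv *\<^sub>v (P *\<^sub>v (U *\<^sub>v y))" by (rule Pinv_cancel[symmetric]) (rule vcarr(1)[OF y])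
  also have "\<dots> = Pinv *\<^sub>v (P *\<^sub>v (U *\<^sub>v y'))" using 1 by (rule arg_cong)
  also have "\<dots> = U *\<^sub>v y'" by (rule Pinv_cancel) (rule vcarr(1)[OF y'])
  finally have eU: "U *\<^sub>v y = U *\<^sub>v y'" .
  have eG: "St *\<^sub>v (U *\<^sub>v y) + Lo *\<^sub>v y = St *\<^sub>v (U *\<^sub>v y') + Lo *\<^sub>v y'"
    using G[OF y] G[OF y'] eq by metis
  show "y = y'"
  proof (rule eq_vecI)
    show "dim_vec y = dim_vec y'" using y y' by simp
    fix i assume "i < dim_vec y'"
    then have i: "i < m" using y' by simp
    have a: "(U *\<^sub>v y) $ i = (U *\<^sub>v y') $ i" using eU by (rule arg_cong)
    have dL: "dim_vec (Lo *\<^sub>v y) = m" "dim_vec (Lo *\<^sub>v y') = m" by simp_all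
    have "(St *\<^sub>v (U *\<^sub>v y)) $ i + (Lo *\<^sub>v y) $ i = (St *\<^sub>v (U *\<^sub>v y) + Lo *\<^sub>v y) $ i"
      using index_add_vec(1)[of i "Lo *\<^sub>v y" "St *\<^sub>v (U *\<^sub>v y)"] dL i by simp
    also have "\<dots> = (St *\<^sub>v (U *\<^sub>v y') + Lo *\<^sub>v y') $ i" using eG by (rule arg_cong)
    also have "\<dots> = (St *\<^sub>v (U *\<^sub>v y')) $ i + (Lo *\<^sub>v y') $ i"
      using index_add_vec(1)[of i "Lo *\<^sub>v y'" "St *\<^sub>v (U *\<^sub>v y')"] dL i by simp
    also have "\<dots> = (St *\<^sub>v (U *\<^sub>v y)) $ i + (Lo *\<^sub>v y') $ i" using eU by simp
    finally have b: "(Lo *\<^sub>v y) $ i = (Lo *\<^sub>v y') $ i" by (rule add_left_imp_eq)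
    have u1: "(U *\<^sub>v y) $ i = (if i < r then y $ i else 0)" using U_mv[OF y i] unfolding U_def .
    have u2: "(U *\<^sub>v y') $ i = (if i < r then y' $ i else 0)" using U_mv[OF y' i] unfolding U_def .
    have l1: "(Lo *\<^sub>v y) $ i = (if i < r then 0 else y $ i)" using Lo_mv[OF y i] unfolding Lo_def .
    have l2: "(Lo *\<^sub>v y') $ i = (if i < r then 0 else y' $ i)" using Lo_mv[OF y' i] unfolding Lo_def .
    show "y $ i = y' $ i"
    proof (cases "i < r")
      case True then show ?thesis using a u1 u2 by simp
    next
      case False then show ?thesis using b l1 l2 by simp
    qed
  qed
qed

lemma RS_card: "card (vec_space.row_space (2*m) M) = 2 ^ m"
  using RS card_image[OF MT_inj] card_carrier_vec_bit by simp

lemma RS_grass: "vec_space.row_space (2*m) M \<in> grass (2*m) m"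
proof -
  have "(2::nat) ^ dimS (2*m) (vec_space.row_space (2*m) M) = 2 ^ m"
    using subsp_card_dim[OF RS_subsp] RS_card by simp
  then show ?thesis using grass_iff RS_subsp by simp
qed

lemma RS_iso:
  assumes x: "x \<in> vec_space.row_space (2*m) M" and x': "x' \<in> vec_space.row_space (2*m) M"
  shows "symp_form m x x' = 0"
proof -
  obtain y where y: "y \<in> carrier_vec m" and xy: "x = transpose_mat M *\<^sub>v y" using x RS by auto
  obtain y' where y': "y' \<in> carrier_vec m" and xy': "x' = transpose_mat M *\<^sub>v y'" using x' RS by auto
  define z where "z = vec_last x m"
  define z' where "z' = vec_last x' m"
  define u where "u = U *\<^sub>v y"
  define u' where "u' = U *\<^sub>v y'"
  have zc: "z \<in> carrier_vec m" "z' \<in> carrier_vec m" unfolding z_def z'_def by auto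
  have uc: "u \<in> carrier_vec m" "u' \<in> carrier_vec m" unfolding u_def u'_def using y y' by auto
  have Lyc: "Lo *\<^sub>v y \<in> carrier_vec m" "Lo *\<^sub>v y' \<in> carrier_vec m" using y y' by auto
  have Suc: "St *\<^sub>v u \<in> carrier_vec m" "St *\<^sub>v u' \<in> carrier_vec m" using uc by auto
  have f: "vec_first x m = P *\<^sub>v u" "vec_first x' m = P *\<^sub>v u'" using F[OF y] F[OF y'] xy xy' u_def u'_def by auto
  have g: "transpose_mat P *\<^sub>v z = St *\<^sub>v u + Lo *\<^sub>v y" "transpose_mat P *\<^sub>v z' = St *\<^sub>v u' + Lo *\<^sub>v y'"
    using G[OF y] G[OF y'] xy xy' u_def u'_def z_def z'_def by auto
  have low: "(Lo *\<^sub>v y) \<bullet> u' = 0" "(Lo *\<^sub>v y') \<bullet> u = 0"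
    using scalar_prod_split_lower[OF y y'] scalar_prod_split_lower[OF y' y] unfolding Lo_def U_def u_def u'_def by auto
  have t1: "z \<bullet> (P *\<^sub>v u') = (St *\<^sub>v u) \<bullet> u'"
  proof -
    have "z \<bullet> (P *\<^sub>v u') = (transpose_mat P *\<^sub>v z) \<bullet> u'"
      using transpose_vec_mult_scalar[OF PC uc(2) zc(1)] by simp
    also have "\<dots> = (St *\<^sub>v u) \<bullet> u' + (Lo *\<^sub>v y) \<bullet> u'"
      using g(1) add_scalar_prod_distrib[OF Suc(1) Lyc(1) uc(2)] by simp
    finally show ?thesis using low by simp
  qed
  have t2: "(P *\<^sub>v u) \<bullet> z' = (St *\<^sub>v u) \<bullet> u'"
  proof -
    have "(P *\<^sub>v u) \<bullet> z' = z' \<bullet> (P *\<^sub>v u)" using comm_scalar_prod[of "P *\<^sub>v u" m z'] uc zc by simp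
    also have "\<dots> = (transpose_mat P *\<^sub>v z') \<bullet> u"
      using transpose_vec_mult_scalar[OF PC uc(1) zc(2)] by simp
    also have "\<dots> = (St *\<^sub>v u') \<bullet> u + (Lo *\<^sub>v y') \<bullet> u"
      using g(2) add_scalar_prod_distrib[OF Suc(2) Lyc(2) uc(1)] by simp
    also have "\<dots> = (St *\<^sub>v u') \<bullet> u" using low by simp
    also have "\<dots> = (transpose_mat St *\<^sub>v u') \<bullet> u" using StT by simp
    also have "\<dots> = u' \<bullet> (St *\<^sub>v u)" using transpose_vec_mult_scalar[OF StC uc(1) uc(2)] .
    also have "\<dots> = (St *\<^sub>v u) \<bullet> u'" using comm_scalar_prod[of u' m "St *\<^sub>v u"] uc Suc by simp
    finally show ?thesis .
  qed
  show ?thesis unfolding symp_form_def using t1 t2 f z_def z'_def by simp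
qed

lemma lag_in: "lag_map m (r, H, S) \<in> lagrangians m"
  unfolding lagrangians_def lag_eq using RS_grass RS_iso by auto

lemma PU_eq:
  assumes y: "y \<in> carrier_vec m"
  shows "P *\<^sub>v (U *\<^sub>v y) = Hm *\<^sub>v vec r (\<lambda>j. y $ j)"
proof (rule eq_vecI)
  have HmC: "Hm \<in> carrier_mat m r" using crrefD(1)[OF C] .
  show "dim_vec (P *\<^sub>v (U *\<^sub>v y)) = dim_vec (Hm *\<^sub>v vec r (\<lambda>j. y $ j))" using HmC by simp
  fix k assume "k < dim_vec (Hm *\<^sub>v vec r (\<lambda>j. y $ j))"
  then have k: "k < m" using HmC by simp
  have uc: "U *\<^sub>v y \<in> carrier_vec m" using y by simp
  have "(P *\<^sub>v (U *\<^sub>v y)) $ k = (\<Sum>j\<in>{0..<r}. Hm $$ (k,j) * (U *\<^sub>v y) $ j) +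
     (\<Sum>t\<in>{0..<m-r}. (if k = piv ({0..<m} - I) t then 1 else 0) * (U *\<^sub>v y) $ (r + t))"
    using Pm_mv[OF C k uc] P_eq by simp
  also have "\<dots> = (\<Sum>j\<in>{0..<r}. Hm $$ (k,j) * y $ j)"
    using U_mv[OF y] rm unfolding U_def by (simp del: index_mult_mat_vec)
  also have "\<dots> = (Hm *\<^sub>v vec r (\<lambda>j. y $ j)) $ k"
    using mv_index[of k Hm "vec r (\<lambda>j. y $ j)"] HmC k by simp
  finally show "(P *\<^sub>v (U *\<^sub>v y)) $ k = (Hm *\<^sub>v vec r (\<lambda>j. y $ j)) $ k" .
qed

lemma Hmem: "h \<in> H \<longleftrightarrow> (\<exists>x\<in>carrier_vec r. h = Hm *\<^sub>v x)"
proof -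
  have HmC: "Hm \<in> carrier_mat m r" using crrefD(1)[OF C] .
  have "H = {Hm *\<^sub>v x |x. x \<in> carrier_vec r}" using col_space_carrier[OF HmC] cs by simp
  then show ?thesis by blast
qed

lemma first_image: "(\<lambda>x. vec_first x m) ` vec_space.row_space (2*m) M = H"
proof -
  have "(\<lambda>x. vec_first x m) ` vec_space.row_space (2*m) M = (\<lambda>y. vec_first (transpose_mat M *\<^sub>v y) m) ` carrier_vec m"
    unfolding RS image_image ..
  also have "\<dots> = (\<lambda>y. Hm *\<^sub>v vec r (\<lambda>j. y $ j)) ` carrier_vec m"
  proof (rule image_cong[OF refl])
    fix y :: "bit vec" assume y: "y \<in> carrier_vec m"
    show "vec_first (transpose_mat M *\<^sub>v y) m = Hm *\<^sub>v vec r (\<lambda>j. y $ j)"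
      using F[OF y] PU_eq[OF y] by (rule trans)
  qed
  also have "\<dots> = H"
  proof (intro equalityI subsetI)
      fix h assume "h \<in> (\<lambda>y. Hm *\<^sub>v vec r (\<lambda>j. y $ j)) ` carrier_vec m"
      then obtain y where "h = Hm *\<^sub>v vec r (\<lambda>j. y $ j)" by blast
      then show "h \<in> H" unfolding Hmem using vec_carrier by blast
    next
      fix h assume "h \<in> H"
      then obtain x where x: "x \<in> carrier_vec r" and h: "h = Hm *\<^sub>v x" unfolding Hmem by blast
      define y where "y = vec m (\<lambda>j. if j < r then x $ j else 0)"
      have "vec r (\<lambda>j. y $ j) = x"
      proof (rule eq_vecI)
        fix j assume "j < dim_vec x"
        then have "j < r" using x by simp
        then show "vec r (\<lambda>j. y $ j) $ j = x $ j" using rm unfolding y_def by simp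
      qed (use x in simp)
      moreover have "y \<in> carrier_vec m" unfolding y_def by simp
      ultimately show "h \<in> (\<lambda>y. Hm *\<^sub>v vec r (\<lambda>j. y $ j)) ` carrier_vec m"
        using h by (intro image_eqI[where x = y]) simp_all
  qed
  finally show ?thesis .
qed

end



context trip begin

lemma Lo_low: "y \<in> carrier_vec m \<Longrightarrow> k < r \<Longrightarrow> (Lo *\<^sub>v y) $ k = 0"
  using Lo_mv[of y m k r] rm unfolding Lo_def by simp

lemma St_col:
  assumes j: "j < r" and k: "k < r"
  shows "(St *\<^sub>v (U *\<^sub>v unit_vec m j)) $ k = S $$ (k,j)"
proof -
  have uc: "U *\<^sub>v unit_vec m j \<in> carrier_vec m" by simp
  have "(St *\<^sub>v (U *\<^sub>v unit_vec m j)) $ k = (\<Sum>l\<in>{0..<r}. S $$ (k,l) * (U *\<^sub>v unit_vec m j) $ l)"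
    using St_mv[OF SC uc, of k] k rm unfolding St_def by simp
  also have "\<dots> = (\<Sum>l\<in>{0..<r}. S $$ (k,l) * (if j = l then 1 else 0))"
    by (rule sum.cong[OF refl]) (use U_mv[of "unit_vec m j" m _ r] j rm in \<open>auto simp: U_def\<close>)
  also have "\<dots> = S $$ (k,j)" using sum_delta_bit[of "{0..<r}" "\<lambda>l. S $$ (k,l)" j] j by simp
  finally show ?thesis .
qed

end

lemma lag_inj: "inj_on (lag_map m) (triples m)"
proof (rule inj_onI)
  fix t t' assume t: "t \<in> triples m" and t': "t' \<in> triples m" and eq: "lag_map m t = lag_map m t'"
  obtain r H S where tt: "t = (r, H, S)" and HG: "H \<in> grass m r" and SS: "S \<in> sym_mats r"
    using t unfolding triples_def by auto
  obtain r' H' S' where tt': "t' = (r', H', S')" and HG': "H' \<in> grass m r'" and SS': "S' \<in> sym_mats r'"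
    using t' unfolding triples_def by auto
  interpret T: trip m r H S using HG SS by unfold_locales
  interpret T': trip m r' H' S' using HG' SS' by unfold_locales
  have LL: "vec_space.row_space (2*m) (T.M) = vec_space.row_space (2*m) (T'.M)"
    using eq T.lag_eq T'.lag_eq tt tt' by simp
  have HH: "H = H'" using T.first_image T'.first_image LL by simp
  have rr: "r = r'" using HG HG' HH unfolding grass_iff by simp
  have "S = S'"
  proof (rule eq_matI)
    show "dim_row S = dim_row S'" "dim_col S = dim_col S'" using T.SC T'.SC unfolding rr by (simp_all only: carrier_matD)
    fix k j assume k: "k < dim_row S'" and j: "j < dim_col S'"
    then have k: "k < r" and j: "j < r" using T'.SC rr by auto
    have jm: "j < m" using j T.rm by simp
    have ej: "unit_vec m j \<in> carrier_vec m" by simp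
    have "transpose_mat T.M *\<^sub>v unit_vec m j \<in> (\<lambda>y. transpose_mat T.M *\<^sub>v y) ` carrier_vec m"
      by (rule imageI[OF ej])
    then have "transpose_mat T.M *\<^sub>v unit_vec m j \<in> (\<lambda>y. transpose_mat T'.M *\<^sub>v y) ` carrier_vec m"
      unfolding T.RS[symmetric] LL T'.RS .
    then obtain y' where y': "y' \<in> carrier_vec m" and xy: "transpose_mat T.M *\<^sub>v unit_vec m j = transpose_mat T'.M *\<^sub>v y'"
      by (rule imageE) (rule that, assumption+)
    have PP: "T'.P = T.P" "T'.U = T.U" "T'.Lo = T.Lo" "T'.Pinv = T.Pinv"
      unfolding T.P_def T'.P_def T.U_def T'.U_def T.Lo_def T'.Lo_def T.Pinv_def T'.Pinv_def rr HH by simp_all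
    have "T.P *\<^sub>v (T.U *\<^sub>v unit_vec m j) = vec_first (transpose_mat T.M *\<^sub>v unit_vec m j) m"
      using T.F[OF ej] by (rule sym)
    also have "\<dots> = vec_first (transpose_mat T'.M *\<^sub>v y') m" using xy by (rule arg_cong)
    also have "\<dots> = T'.P *\<^sub>v (T'.U *\<^sub>v y')" using T'.F[OF y'] .
    also have "\<dots> = T.P *\<^sub>v (T.U *\<^sub>v y')" unfolding PP ..
    finally have e1: "T.P *\<^sub>v (T.U *\<^sub>v unit_vec m j) = T.P *\<^sub>v (T.U *\<^sub>v y')" .
    have "T.U *\<^sub>v unit_vec m j = T.Pinv *\<^sub>v (T.P *\<^sub>v (T.U *\<^sub>v unit_vec m j))"
      using T.Pinv_cancel[OF T.vcarr(1)[OF ej]] by (rule sym)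
    also have "\<dots> = T.Pinv *\<^sub>v (T.P *\<^sub>v (T.U *\<^sub>v y'))" unfolding e1 ..
    also have "\<dots> = T.U *\<^sub>v y'" using T.Pinv_cancel[OF T.vcarr(1)[OF y']] .
    finally have eU: "T.U *\<^sub>v unit_vec m j = T.U *\<^sub>v y'" .
    have "T.St *\<^sub>v (T.U *\<^sub>v unit_vec m j) + T.Lo *\<^sub>v unit_vec m j = transpose_mat T.P *\<^sub>v vec_last (transpose_mat T.M *\<^sub>v unit_vec m j) m"
      using T.G[OF ej] by (rule sym)
    also have "\<dots> = transpose_mat T'.P *\<^sub>v vec_last (transpose_mat T'.M *\<^sub>v y') m" unfolding xy PP ..
    also have "\<dots> = T'.St *\<^sub>v (T'.U *\<^sub>v y') + T'.Lo *\<^sub>v y'" using T'.G[OF y'] .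
    finally have "T.St *\<^sub>v (T.U *\<^sub>v unit_vec m j) + T.Lo *\<^sub>v unit_vec m j = T'.St *\<^sub>v (T.U *\<^sub>v y') + T.Lo *\<^sub>v y'"
      unfolding PP .
    then have E2: "T.St *\<^sub>v (T.U *\<^sub>v unit_vec m j) + T.Lo *\<^sub>v unit_vec m j = T'.St *\<^sub>v (T.U *\<^sub>v unit_vec m j) + T.Lo *\<^sub>v y'"
      unfolding eU[symmetric] .
    have km: "k < m" using k T.rm by simp
    have d1: "k < dim_vec (T.Lo *\<^sub>v unit_vec m j)" "k < dim_vec (T.Lo *\<^sub>v y')" using km by simp_all
    have "(T.St *\<^sub>v (T.U *\<^sub>v unit_vec m j)) $ k + (T.Lo *\<^sub>v unit_vec m j) $ k =
       (T'.St *\<^sub>v (T.U *\<^sub>v unit_vec m j)) $ k + (T.Lo *\<^sub>v y') $ k"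
      using arg_cong[OF E2, of "\<lambda>v. v $ k"] unfolding index_add_vec(1)[OF d1(1)] index_add_vec(1)[OF d1(2)] .
    then have "(T.St *\<^sub>v (T.U *\<^sub>v unit_vec m j)) $ k = (T'.St *\<^sub>v (T'.U *\<^sub>v unit_vec m j)) $ k"
      unfolding T.Lo_low[OF ej k] T.Lo_low[OF y' k] PP by simp
    moreover have "(T'.St *\<^sub>v (T'.U *\<^sub>v unit_vec m j)) $ k = S' $$ (k, j)"
      by (rule T'.St_col) (use j k rr in simp_all)
    ultimately show "S $$ (k, j) = S' $$ (k, j)"
      unfolding T.St_col[OF j k] by simp
  qed
  then show "t = t'" using tt tt' HH rr by simp
qed


lemma symp_sum:
  assumes x: "x \<in> carrier_vec (2*m)" and w: "w \<in> carrier_vec (2*m)"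
  shows "symp_form m x w = (\<Sum>k\<in>{0..<m}. x $ (m+k) * w $ k) + (\<Sum>k\<in>{0..<m}. x $ k * w $ (m+k))"
proof -
  have "vec_last x m \<bullet> vec_first w m = (\<Sum>k\<in>{0..<m}. x $ (m+k) * w $ k)"
    unfolding scalar_prod_def vec_last_def vec_first_def using x by (intro sum.cong) auto
  moreover have "vec_first x m \<bullet> vec_last w m = (\<Sum>k\<in>{0..<m}. x $ k * w $ (m+k))"
    unfolding scalar_prod_def vec_last_def vec_first_def using w by (intro sum.cong) auto
  ultimately show ?thesis unfolding symp_form_def by simp
qed

lemma key_identity:
  fixes r m :: nat
  assumes W: "subsp (2*m) L" and iso: "\<forall>x\<in>L. \<forall>y\<in>L. symp_form m x y = 0"
    and xL: "x \<in> L" and xsL: "\<And>j. j < r \<Longrightarrow> xs j \<in> L"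
    and hx: "\<And>k. k < m \<Longrightarrow> x $ k = (\<Sum>j\<in>{0..<r}. c j * xs j $ k)"
    and i: "i < r"
  shows "(\<Sum>k\<in>{0..<m}. x $ (m+k) * xs i $ k) = (\<Sum>j\<in>{0..<r}. c j * (\<Sum>k\<in>{0..<m}. xs j $ (m+k) * xs i $ k))"
proof -
  define z' where "z' = vec (2*m) (\<lambda>k. \<Sum>j\<in>{0..<r}. c j * xs j $ k)"
  have z'L: "z' \<in> L" unfolding z'_def by (rule subsp_sum[OF W]) (use xsL in auto)
  define z where "z = x + z'"
  have zL: "z \<in> L" unfolding z_def by (rule subsp_add[OF W xL z'L])
  have xc: "x \<in> carrier_vec (2*m)" using subsp_carrierD[OF W xL] .
  have z'c: "z' \<in> carrier_vec (2*m)" unfolding z'_def by simp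
  have zc: "z \<in> carrier_vec (2*m)" unfolding z_def using xc z'c by simp
  have xic: "xs i \<in> carrier_vec (2*m)" using subsp_carrierD[OF W xsL[OF i]] .
  have zk: "z $ k = 0" if k: "k < m" for k
  proof -
    have "z $ k = x $ k + z' $ k" unfolding z_def using z'c k by simp
    also have "\<dots> = 0" unfolding z'_def using k hx[OF k] by simp
    finally show ?thesis .
  qed
  have zmk: "z $ (m+k) = x $ (m+k) + (\<Sum>j\<in>{0..<r}. c j * xs j $ (m+k))" if k: "k < m" for k
    unfolding z_def z'_def using z'c k by simp
  have "0 = symp_form m z (xs i)" using iso zL xsL[OF i] by simp
  also have "\<dots> = (\<Sum>k\<in>{0..<m}. z $ (m+k) * xs i $ k) + (\<Sum>k\<in>{0..<m}. z $ k * xs i $ (m+k))"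
    by (rule symp_sum[OF zc xic])
  also have "(\<Sum>k\<in>{0..<m}. z $ k * xs i $ (m+k)) = 0" by (rule sum.neutral) (simp add: zk)
  also have "(\<Sum>k\<in>{0..<m}. z $ (m+k) * xs i $ k) =
      (\<Sum>k\<in>{0..<m}. x $ (m+k) * xs i $ k + (\<Sum>j\<in>{0..<r}. c j * (xs j $ (m+k) * xs i $ k)))"
    by (rule sum.cong[OF refl]) (simp add: zmk distrib_right sum_distrib_right mult.assoc)
  also have "\<dots> = (\<Sum>k\<in>{0..<m}. x $ (m+k) * xs i $ k) + (\<Sum>j\<in>{0..<r}. c j * (\<Sum>k\<in>{0..<m}. xs j $ (m+k) * xs i $ k))"
    by (simp add: sum.distrib sum_distrib_left sum.swap[of _ "{0..<m}"])
  finally show ?thesis by (simp add: bit_add_eq0)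
qed



lemma first_subsp:
  assumes W: "subsp (2*m) L"
  shows "subsp m ((\<lambda>x. vec_first x m) ` L)"
proof (rule subspI)
  show "(\<lambda>x. vec_first x m) ` L \<subseteq> carrier_vec m" by auto
  have "vec_first (0\<^sub>v (2*m)) m = 0\<^sub>v m" unfolding vec_first_def by (intro eq_vecI) auto
  then show "0\<^sub>v m \<in> (\<lambda>x. vec_first x m) ` L" using subsp_zero[OF W] by (metis image_eqI)
next
  fix u v assume "u \<in> (\<lambda>x. vec_first x m) ` L" "v \<in> (\<lambda>x. vec_first x m) ` L"
  then obtain x y where x: "x \<in> L" and y: "y \<in> L" and u: "u = vec_first x m" and v: "v = vec_first y m" by blast
  have yc: "y \<in> carrier_vec (2*m)" using subsp_carrierD[OF W y] .
  have "u + v = vec_first (x + y) m" unfolding u v vec_first_def using yc by (intro eq_vecI) auto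
  then show "u + v \<in> (\<lambda>x. vec_first x m) ` L" using subsp_add[OF W x y] by (metis image_eqI)
next
  fix c u assume "u \<in> (\<lambda>x. vec_first x m) ` L"
  then obtain x where x: "x \<in> L" and u: "u = vec_first x m" by blast
  have xc: "x \<in> carrier_vec (2*m)" using subsp_carrierD[OF W x] .
  have "c \<cdot>\<^sub>v u = vec_first (c \<cdot>\<^sub>v x) m" unfolding u vec_first_def using xc by (intro eq_vecI) auto
  then show "c \<cdot>\<^sub>v u \<in> (\<lambda>x. vec_first x m) ` L" using subsp_smult[OF W x] by (metis image_eqI)
qed

lemma split_eq:
  assumes x: "x \<in> carrier_vec (2*m)" and y: "y \<in> carrier_vec (2*m)"
    and "vec_first x m = vec_first y m" and "vec_last x m = vec_last y m"
  shows "x = y"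
proof -
  have x': "x \<in> carrier_vec (m+m)" and y': "y \<in> carrier_vec (m+m)" using x y by (simp_all add: mult_2)
  show ?thesis using vec_first_last_append[OF x'] vec_first_last_append[OF y'] assms(3,4) by metis
qed

lemma lag_surj:
  assumes LL: "L \<in> lagrangians m"
  shows "L \<in> lag_map m ` triples m"
proof -
  have LG: "L \<in> grass (2*m) m" and iso: "\<forall>x\<in>L. \<forall>y\<in>L. symp_form m x y = 0"
    using LL unfolding lagrangians_def by auto
  have W: "subsp (2*m) L" using LG grass_iff by auto
  have cardL: "card L = 2^m" using grass_card[OF LG] .
  define H where "H = (\<lambda>x. vec_first x m) ` L"
  have WH: "subsp m H" unfolding H_def by (rule first_subsp[OF W])
  define r where "r = dimS m H"
  have HG: "H \<in> grass m r" using WH r_def grass_iff by auto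
  have rm: "r \<le> m"
  proof -
    have "card H \<le> card (carrier_vec m :: bit vec set)"
      by (rule card_mono[OF finite_carrier_vec_bit subsp_carrier[OF WH]])
    then have "(2::nat)^r \<le> 2^m" using grass_card[OF HG] card_carrier_vec_bit by simp
    then show ?thesis by simp
  qed
  define Hm where "Hm = fst (echelon m r H)"
  define I where "I = snd (echelon m r H)"
  have C: "crref m r Hm I" and cs: "vec_space.col_space m Hm = H"
    using echelon_props[OF HG] unfolding Hm_def I_def by auto
  have HmC: "Hm \<in> carrier_mat m r" using crrefD(1)[OF C] .
  have Hcs: "H = {Hm *\<^sub>v x |x. x \<in> carrier_vec r}" using col_space_carrier[OF HmC] cs by simp
  define h where "h j = Hm *\<^sub>v unit_vec r j" for j
  have hH: "h j \<in> H" if "j < r" for j unfolding Hcs h_def by (intro CollectI exI[of _ "unit_vec r j"]) simp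
  have hk: "h j $ k = Hm $$ (k,j)" if "j < r" "k < m" for j k
    unfolding h_def using crref_col[OF C that] .
  define xs where "xs j = (SOME x. x \<in> L \<and> vec_first x m = h j)" for j
  have xs: "xs j \<in> L \<and> vec_first (xs j) m = h j" if j: "j < r" for j
  proof -
    obtain x where "x \<in> L" "h j = vec_first x m" using hH[OF j] unfolding H_def by (rule imageE)
    then have "\<exists>x. x \<in> L \<and> vec_first x m = h j" by auto
    then show ?thesis unfolding xs_def by (rule someI_ex)
  qed
  have xsL: "xs j \<in> L" if "j < r" for j using xs[OF that] by simp
  have xsc: "xs j \<in> carrier_vec (2*m)" if "j < r" for j using subsp_carrierD[OF W xsL[OF that]] .
  have xsk: "xs j $ k = Hm $$ (k,j)" if j: "j < r" and k: "k < m" for j k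
  proof -
    have "xs j $ k = vec_first (xs j) m $ k" unfolding vec_first_def using k by simp
    also have "\<dots> = h j $ k" using xs[OF j] by simp
    finally show ?thesis using hk[OF j k] by simp
  qed
  define S where "S = mat r r (\<lambda>(k,j). \<Sum>l\<in>{0..<m}. xs j $ (m+l) * xs k $ l)"
  have SC: "S \<in> carrier_mat r r" unfolding S_def by simp
  have Ssym: "S $$ (k,j) = S $$ (j,k)" if k: "k < r" and j: "j < r" for k j
  proof -
    have "0 = symp_form m (xs j) (xs k)" using iso xsL j k by simp
    also have "\<dots> = (\<Sum>l\<in>{0..<m}. xs j $ (m+l) * xs k $ l) + (\<Sum>l\<in>{0..<m}. xs j $ l * xs k $ (m+l))"
      by (rule symp_sum[OF xsc[OF j] xsc[OF k]])
    finally have "(\<Sum>l\<in>{0..<m}. xs j $ (m+l) * xs k $ l) + (\<Sum>l\<in>{0..<m}. xs j $ l * xs k $ (m+l)) = 0"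
      by (rule sym)
    then have e1: "(\<Sum>l\<in>{0..<m}. xs j $ (m+l) * xs k $ l) = (\<Sum>l\<in>{0..<m}. xs j $ l * xs k $ (m+l))"
      by (simp only: bit_add_eq0)
    have e2: "(\<Sum>l\<in>{0..<m}. xs j $ l * xs k $ (m+l)) = (\<Sum>l\<in>{0..<m}. xs k $ (m+l) * xs j $ l)"
      by (intro sum.cong refl) (rule mult.commute)
    have "S $$ (k,j) = (\<Sum>l\<in>{0..<m}. xs j $ (m+l) * xs k $ l)" unfolding S_def using j k by simp
    moreover have "S $$ (j,k) = (\<Sum>l\<in>{0..<m}. xs k $ (m+l) * xs j $ l)" unfolding S_def using j k by simp
    ultimately show ?thesis using e1 e2 by simp
  qed
  have SS: "S \<in> sym_mats r"
    unfolding sym_mats_def using SC Ssym by (auto intro!: eq_matI)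
  interpret T: trip m r H S using HG SS by unfold_locales
  have THm: "T.Hm = Hm" "T.I = I" using T.Hm_def T.I_def Hm_def I_def by simp_all
  have TP: "T.P = Pm m r Hm I" using T.P_eq THm by simp
  have sub: "L \<subseteq> vec_space.row_space (2*m) T.M"
  proof
    fix x assume xL: "x \<in> L"
    have xc: "x \<in> carrier_vec (2*m)" using subsp_carrierD[OF W xL] .
    define a where "a = vec_first x m"
    have "a \<in> H" unfolding a_def H_def using xL by blast
    then obtain c where c: "c \<in> carrier_vec r" and ac: "a = Hm *\<^sub>v c" unfolding Hcs by blast
    have hx: "x $ k = (\<Sum>j\<in>{0..<r}. c $ j * xs j $ k)" if k: "k < m" for k
    proof -
      have "x $ k = a $ k" unfolding a_def vec_first_def using k by simp
      also have "\<dots> = (\<Sum>j\<in>{0..<r}. Hm $$ (k,j) * c $ j)"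
        unfolding ac using mv_index[of k Hm c] HmC c k by simp
      also have "\<dots> = (\<Sum>j\<in>{0..<r}. c $ j * xs j $ k)"
        by (rule sum.cong[OF refl]) (simp add: xsk k mult.commute)
      finally show ?thesis .
    qed
    define b where "b = vec_last x m"
    have bc: "b \<in> carrier_vec m" unfolding b_def by simp
    define y where "y = vec m (\<lambda>i. if i < r then c $ i else (transpose_mat T.P *\<^sub>v b) $ i)"
    have yc: "y \<in> carrier_vec m" unfolding y_def by simp
    have f1: "vec_first (transpose_mat T.M *\<^sub>v y) m = a"
    proof -
      have "vec r (\<lambda>j. y $ j) = c"
      proof (rule eq_vecI)
        fix j assume "j < dim_vec c"
        then have "j < r" using c by simp
        then show "vec r (\<lambda>j. y $ j) $ j = c $ j" using rm unfolding y_def by simp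
      qed (use c in simp)
      then show ?thesis using T.F[OF yc] T.PU_eq[OF yc] THm ac by simp
    qed
    have f2: "transpose_mat T.P *\<^sub>v vec_last (transpose_mat T.M *\<^sub>v y) m = transpose_mat T.P *\<^sub>v b"
    proof (rule eq_vecI)
      show "dim_vec (transpose_mat T.P *\<^sub>v vec_last (transpose_mat T.M *\<^sub>v y) m) = dim_vec (transpose_mat T.P *\<^sub>v b)"
        by simp
      fix i assume "i < dim_vec (transpose_mat T.P *\<^sub>v b)"
      then have i: "i < m" by simp
      have Uy: "T.U *\<^sub>v y \<in> carrier_vec m" using yc by simp
      have dL: "i < dim_vec (T.Lo *\<^sub>v y)" using i by simp
      have "(transpose_mat T.P *\<^sub>v vec_last (transpose_mat T.M *\<^sub>v y) m) $ i = (T.St *\<^sub>v (T.U *\<^sub>v y) + T.Lo *\<^sub>v y) $ i"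
        using T.G[OF yc] by simp
      also have "\<dots> = (T.St *\<^sub>v (T.U *\<^sub>v y)) $ i + (T.Lo *\<^sub>v y) $ i"
        by (rule index_add_vec(1)[OF dL])
      also have "\<dots> = (transpose_mat T.P *\<^sub>v b) $ i"
      proof (cases "i < r")
        case True
        have lo: "(T.Lo *\<^sub>v y) $ i = 0" using T.Lo_low[OF yc True] .
        have "(T.St *\<^sub>v (T.U *\<^sub>v y)) $ i = (\<Sum>j\<in>{0..<r}. S $$ (i,j) * (T.U *\<^sub>v y) $ j)"
          using St_mv[OF SC Uy i rm] True unfolding T.St_def by simp
        also have "\<dots> = (\<Sum>j\<in>{0..<r}. c $ j * (\<Sum>l\<in>{0..<m}. xs j $ (m+l) * xs i $ l))"
        proof (rule sum.cong[OF refl])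
          fix j assume "j \<in> {0..<r}"
          then have j: "j < r" by simp
          have "(T.U *\<^sub>v y) $ j = c $ j" using U_mv[OF yc, of j r] j rm unfolding T.U_def y_def by simp
          then show "S $$ (i,j) * (T.U *\<^sub>v y) $ j = c $ j * (\<Sum>l\<in>{0..<m}. xs j $ (m+l) * xs i $ l)"
            unfolding S_def using j True by (simp add: mult.commute)
        qed
        also have "\<dots> = (\<Sum>k\<in>{0..<m}. x $ (m+k) * xs i $ k)"
          by (rule key_identity[OF W iso xL xsL hx True, symmetric])
        also have "\<dots> = (transpose_mat T.P *\<^sub>v b) $ i"
        proof -
          have "(transpose_mat T.P *\<^sub>v b) $ i = (\<Sum>k\<in>{0..<m}. transpose_mat T.P $$ (i,k) * b $ k)"
            using mv_index[of i "transpose_mat T.P" b] i bc by simp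
          also have "\<dots> = (\<Sum>k\<in>{0..<m}. x $ (m+k) * xs i $ k)"
          proof (rule sum.cong[OF refl])
            fix k assume "k \<in> {0..<m}"
            then have k: "k < m" by simp
            have "transpose_mat T.P $$ (i,k) = T.P $$ (k,i)" using i k by simp
            also have "\<dots> = Hm $$ (k,i)" unfolding TP using Pm_index[OF C k i] True by simp
            finally show "transpose_mat T.P $$ (i,k) * b $ k = x $ (m+k) * xs i $ k"
              unfolding b_def vec_last_def using xc k xsk[OF True k] by (simp add: mult.commute)
          qed
          finally show ?thesis by simp
        qed
        finally show ?thesis using lo by simp
      next
        case False
        have "(T.St *\<^sub>v (T.U *\<^sub>v y)) $ i = 0"
          using St_mv[OF SC Uy i rm] False unfolding T.St_def by simp
        moreover have "(T.Lo *\<^sub>v y) $ i = y $ i" using Lo_mv[OF yc i, of r] False unfolding T.Lo_def by simp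
        moreover have "y $ i = (transpose_mat T.P *\<^sub>v b) $ i" unfolding y_def using i False by simp
        ultimately show ?thesis by simp
      qed
      finally show "(transpose_mat T.P *\<^sub>v vec_last (transpose_mat T.M *\<^sub>v y) m) $ i = (transpose_mat T.P *\<^sub>v b) $ i" .
    qed
    have "vec_last (transpose_mat T.M *\<^sub>v y) m = transpose_mat T.Pinv *\<^sub>v (transpose_mat T.P *\<^sub>v vec_last (transpose_mat T.M *\<^sub>v y) m)"
      by (rule T.PT_cancel[symmetric]) simp
    also have "\<dots> = transpose_mat T.Pinv *\<^sub>v (transpose_mat T.P *\<^sub>v b)" unfolding f2 ..
    also have "\<dots> = b" by (rule T.PT_cancel[OF bc])
    finally have f3: "vec_last (transpose_mat T.M *\<^sub>v y) m = b" .
    have "x = transpose_mat T.M *\<^sub>v y"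
    proof (rule split_eq[OF xc])
      show "transpose_mat T.M *\<^sub>v y \<in> carrier_vec (2*m)" by (rule carrier_vecI) (rule T.MT_dim)
      show "vec_first x m = vec_first (transpose_mat T.M *\<^sub>v y) m" unfolding f1 a_def ..
      show "vec_last x m = vec_last (transpose_mat T.M *\<^sub>v y) m" unfolding f3 b_def ..
    qed
    then have "x \<in> (\<lambda>y. transpose_mat T.M *\<^sub>v y) ` carrier_vec m" by (rule image_eqI[OF _ yc])
    then show "x \<in> vec_space.row_space (2*m) T.M" unfolding T.RS .
  qed
  have fin: "finite (vec_space.row_space (2*m) T.M)" using subsp_finite[OF T.RS_subsp] .
  have "L = vec_space.row_space (2*m) T.M"
    using card_subset_eq[OF fin sub] cardL T.RS_card by simp
  then have "L = lag_map m (r, H, S)" using T.lag_eq by simp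
  moreover have "(r, H, S) \<in> triples m" unfolding triples_def using rm HG SS by simp
  ultimately show ?thesis by blast
qed



lemma lag_bij: "bij_betw (lag_map m) (triples m) (lagrangians m)"
proof -
  have "lag_map m ` triples m \<subseteq> lagrangians m"
  proof
    fix L assume "L \<in> lag_map m ` triples m"
    then obtain r H S where L: "L = lag_map m (r, H, S)" and HG: "H \<in> grass m r" and SS: "S \<in> sym_mats r"
      unfolding triples_def by auto
    interpret T: trip m r H S using HG SS by unfold_locales
    show "L \<in> lagrangians m" using T.lag_in L by simp
  qed
  moreover have "lagrangians m \<subseteq> lag_map m ` triples m" using lag_surj by blast
  ultimately show ?thesis unfolding bij_betw_def using lag_inj by blast
qed

lemma finite_grass: "finite (grass m r)"
proof -
  have "grass m r \<subseteq> Pow (carrier_vec m)" using grass_iff subsp_carrier by blast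
  then show ?thesis using finite_carrier_vec_bit finite_subset by blast
qed

lemma card_tri: "card {(i,j). i \<le> j \<and> j < (r::nat)} = r * (r + 1) div 2"
proof (induction r)
  case 0 then show ?case by simp
next
  case (Suc r)
  have eq: "{(i,j). i \<le> j \<and> j < Suc r} = {(i,j). i \<le> j \<and> j < r} \<union> (\<lambda>i. (i, r)) ` {0..r}"
    by auto
  have fin: "finite {(i,j). i \<le> j \<and> j < (r::nat)}"
    by (rule finite_subset[of _ "{0..<r} \<times> {0..<r}"]) auto
  have "card {(i,j). i \<le> j \<and> j < Suc r} = card {(i,j). i \<le> j \<and> j < r} + card ((\<lambda>i. (i, r)) ` {0..r})"
    unfolding eq by (rule card_Un_disjoint) (use fin in auto)
  also have "card ((\<lambda>i. (i, r)) ` {0..r}) = r + 1"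
    by (subst card_image) (auto simp: inj_on_def)
  finally show ?case using Suc by simp
qed

lemma card_sym_mats: "card (sym_mats r) = 2 ^ (r * (r + 1) div 2)"
  and finite_sym_mats: "finite (sym_mats r)"
proof -
  define T where "T = {(i,j). i \<le> j \<and> j < r}"
  have finT: "finite T" unfolding T_def by (rule finite_subset[of _ "{0..<r} \<times> {0..<r}"]) auto
  let ?f = "\<lambda>S::bit mat. restrict (\<lambda>(i,j). S $$ (i,j)) T"
  let ?g = "\<lambda>F. mat r r (\<lambda>(i,j). if i \<le> j then F (i,j) else F (j,i)) :: bit mat"
  have bij: "bij_betw ?f (sym_mats r) (T \<rightarrow>\<^sub>E (UNIV::bit set))"
  proof (rule bij_betwI[where g = ?g])
    show "?f \<in> sym_mats r \<rightarrow> T \<rightarrow>\<^sub>E UNIV" by auto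
    show "?g \<in> (T \<rightarrow>\<^sub>E UNIV) \<rightarrow> sym_mats r"
      unfolding sym_mats_def by (auto intro!: eq_matI)
    show "?g (?f S) = S" if S: "S \<in> sym_mats r" for S
    proof -
      have SC: "S \<in> carrier_mat r r" and St: "transpose_mat S = S" using S sym_mats_def by auto
      have sym: "S $$ (j,i) = S $$ (i,j)" if "i < r" "j < r" for i j
        using arg_cong[OF St, of "\<lambda>A. A $$ (i,j)"] that SC by auto
      show ?thesis using SC sym by (intro eq_matI) (auto simp: T_def)
    qed
    show "?f (?g F) = F" if F: "F \<in> T \<rightarrow>\<^sub>E UNIV" for F
    proof (rule ext)
      fix p
      show "?f (?g F) p = F p"
        using F by (cases p) (auto simp: T_def PiE_def extensional_def)
    qed
  qed
  have "card (T \<rightarrow>\<^sub>E (UNIV::bit set)) = 2 ^ card T" using finT by (simp add: card_PiE)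
  moreover have "card T = r * (r + 1) div 2" unfolding T_def by (rule card_tri)
  moreover have "finite (T \<rightarrow>\<^sub>E (UNIV::bit set))" using finT by (simp add: finite_PiE)
  ultimately show "card (sym_mats r) = 2 ^ (r * (r + 1) div 2)" "finite (sym_mats r)"
    using bij_betw_same_card[OF bij] bij_betw_finite[OF bij] by auto
qed

lemma card_triples: "card (triples m) = (\<Sum>r=0..m. 2 ^ (r * (r + 1) div 2) * gauss_binom2 m r)"
proof -
  have "triples m = (SIGMA r:{0..m}. grass m r \<times> sym_mats r)"
    unfolding triples_def by auto
  then have "card (triples m) = (\<Sum>r\<in>{0..m}. card (grass m r \<times> sym_mats r))"
    using finite_grass finite_sym_mats by (simp add: card_SigmaI)
  also have "\<dots> = (\<Sum>r=0..m. 2 ^ (r * (r + 1) div 2) * gauss_binom2 m r)"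
    by (rule sum.cong[OF refl]) (simp add: card_cartesian_product card_sym_mats gauss_binom2_def)
  finally show ?thesis .
qed



definition invs :: "nat \<Rightarrow> nat set \<Rightarrow> (nat \<times> nat) set" where
  "invs m I = {(a,b). a \<in> I \<and> b < m \<and> b \<notin> I \<and> a < b}"

definition Fpos :: "nat \<Rightarrow> nat \<Rightarrow> nat set \<Rightarrow> (nat \<times> nat) set" where
  "Fpos m r I = {(k,j). j < r \<and> k < m \<and> k \<notin> I \<and> piv I j < k}"

lemma finite_invs: "finite (invs m I)"
  by (rule finite_subset[of _ "{0..<m} \<times> {0..<m}"]) (auto simp: invs_def)

lemma finite_Fpos: "finite (Fpos m r I)"
  by (rule finite_subset[of _ "{0..<m} \<times> {0..<r}"]) (auto simp: Fpos_def)

lemma card_Fpos: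
  assumes Im: "I \<subseteq> {0..<m}" and cI: "card I = r"
  shows "card (Fpos m r I) = card (invs m I)"
proof -
  have finI: "finite I" using Im finite_subset by blast
  have "bij_betw (\<lambda>(k,j). (piv I j, k)) (Fpos m r I) (invs m I)"
    unfolding bij_betw_def
  proof
    show "inj_on (\<lambda>(k,j). (piv I j, k)) (Fpos m r I)"
      by (rule inj_onI) (auto simp: Fpos_def piv_inj[OF finI] cI)
    show "(\<lambda>(k,j). (piv I j, k)) ` Fpos m r I = invs m I"
    proof
      show "(\<lambda>(k,j). (piv I j, k)) ` Fpos m r I \<subseteq> invs m I"
        using piv_in[OF finI] cI by (auto simp: Fpos_def invs_def)
      show "invs m I \<subseteq> (\<lambda>(k,j). (piv I j, k)) ` Fpos m r I"
      proof
        fix p assume "p \<in> invs m I"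
        then obtain a b where p: "p = (a,b)" and a: "a \<in> I" and b: "b < m" "b \<notin> I" "a < b"
          unfolding invs_def by auto
        obtain j where j: "j < card I" "piv I j = a" using piv_surj[OF finI a] by auto
        have "(b, j) \<in> Fpos m r I" unfolding Fpos_def using j b cI by auto
        then show "p \<in> (\<lambda>(k,j). (piv I j, k)) ` Fpos m r I" using p j by force
      qed
    qed
  qed
  then show ?thesis by (rule bij_betw_same_card)
qed

lemma card_CR:
  assumes Im: "I \<subseteq> {0..<m}" and cI: "card I = r"
  shows "card {Hm. crref m r Hm I} = 2 ^ card (invs m I)" and "finite {Hm. crref m r Hm I}"
proof -
  have finI: "finite I" using Im finite_subset by blast
  have pm: "piv I j < m" if "j < r" for j using piv_in[OF finI, of j] that cI Im by auto
  let ?F = "Fpos m r I"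
  let ?f = "\<lambda>Hm::bit mat. restrict (\<lambda>(k,j). Hm $$ (k,j)) ?F"
  let ?g = "\<lambda>G. mat m r (\<lambda>(k,j). if (k,j) \<in> ?F then G (k,j) else if k = piv I j then 1 else 0) :: bit mat"
  have bij: "bij_betw ?f {Hm. crref m r Hm I} (?F \<rightarrow>\<^sub>E (UNIV::bit set))"
  proof (rule bij_betwI[where g = ?g])
    show "?f \<in> {Hm. crref m r Hm I} \<rightarrow> ?F \<rightarrow>\<^sub>E UNIV" by auto
    show "?g \<in> (?F \<rightarrow>\<^sub>E UNIV) \<rightarrow> {Hm. crref m r Hm I}"
    proof
      fix G assume "G \<in> ?F \<rightarrow>\<^sub>E (UNIV::bit set)"
      have "crref m r (?g G) I"
        unfolding crref_def Let_def
      proof (intro conjI allI impI)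
        show "?g G \<in> carrier_mat m r" by simp
        show "I \<subseteq> {0..<m}" using Im .
        show "card I = r" using cI .
        fix j assume j: "j < r"
        show "?g G $$ (piv I j, k) = (if j = k then 1 else 0)" if k: "k < r" for k
          using pm[OF j] k j piv_in[OF finI, of j] piv_inj[OF finI, of j k] cI by (auto simp: Fpos_def)
        show "?g G $$ (i, j) = 0" if i: "i < piv I j" for i
          using pm[OF j] i j by (auto simp: Fpos_def)
      qed
      then show "?g G \<in> {Hm. crref m r Hm I}" by simp
    qed
    show "?g (?f Hm) = Hm" if "Hm \<in> {Hm. crref m r Hm I}" for Hm
    proof -
      have C: "crref m r Hm I" using that by simp
      note D = crrefD[OF C]
      show ?thesis
      proof (rule eq_matI)
        show "dim_row (?g (?f Hm)) = dim_row Hm" "dim_col (?g (?f Hm)) = dim_col Hm" using D(1) by auto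
        fix k j assume "k < dim_row Hm" "j < dim_col Hm"
        then have k: "k < m" and j: "j < r" using D(1) by auto
        show "?g (?f Hm) $$ (k, j) = Hm $$ (k, j)"
        proof (cases "(k,j) \<in> ?F")
          case True then show ?thesis using k j by simp
        next
          case False
          show ?thesis
          proof (cases "k = piv I j")
            case True then show ?thesis using k j False D(5)[OF j j] by simp
          next
            case kne: False
            have "Hm $$ (k, j) = 0"
            proof (cases "k \<in> I")
              case True
              then obtain j' where j': "j' < r" "piv I j' = k" using piv_surj[OF finI True] cI by auto
              then have "j' \<noteq> j" using kne by auto
              then show ?thesis using D(5)[OF j'(1) j] j' by simp
            next
              case kI: False
              then have "\<not> piv I j < k" using False k j unfolding Fpos_def by auto
              then have "k < piv I j" using kne by simp
              then show ?thesis using D(6)[OF j] by simp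
            qed
            then show ?thesis using k j False kne by simp
          qed
        qed
      qed
    qed
    show "?f (?g G) = G" if G: "G \<in> ?F \<rightarrow>\<^sub>E UNIV" for G
    proof (rule ext)
      fix p
      show "?f (?g G) p = G p"
        using G by (cases p) (auto simp: Fpos_def PiE_def extensional_def)
    qed
  qed
  have "card (?F \<rightarrow>\<^sub>E (UNIV::bit set)) = 2 ^ card ?F" using finite_Fpos by (simp add: card_PiE)
  moreover have "finite (?F \<rightarrow>\<^sub>E (UNIV::bit set))" using finite_Fpos by (simp add: finite_PiE)
  ultimately show "card {Hm. crref m r Hm I} = 2 ^ card (invs m I)" "finite {Hm. crref m r Hm I}"
    using bij_betw_same_card[OF bij] bij_betw_finite[OF bij] card_Fpos[OF Im cI] by auto
qed

lemma card_grass: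
  "card (grass m r) = (\<Sum>I\<in>{I. I \<subseteq> {0..<m} \<and> card I = r}. 2 ^ card (invs m I))"
proof -
  define E where "E = {(Hm, I). crref m r Hm I}"
  define Ps where "Ps = {I. I \<subseteq> {0..<m} \<and> card I = r}"
  have finPs: "finite Ps" unfolding Ps_def by (rule finite_subset[of _ "Pow {0..<m}"]) auto
  have bij: "bij_betw (\<lambda>(Hm, I). vec_space.col_space m Hm) E (grass m r)"
    unfolding bij_betw_def
  proof
    show "inj_on (\<lambda>(Hm, I). vec_space.col_space m Hm) E"
    proof (rule inj_onI)
      fix p q assume "p \<in> E" "q \<in> E" and eq: "(\<lambda>(Hm, I). vec_space.col_space m Hm) p = (\<lambda>(Hm, I). vec_space.col_space m Hm) q"
      then obtain Hm I Hm' I' where p: "p = (Hm, I)" "crref m r Hm I" and q: "q = (Hm', I')" "crref m r Hm' I'"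
        unfolding E_def by auto
      show "p = q" using crref_unique[OF p(2) q(2)] eq p q by simp
    qed
    show "(\<lambda>(Hm, I). vec_space.col_space m Hm) ` E = grass m r"
    proof
      show "(\<lambda>(Hm, I). vec_space.col_space m Hm) ` E \<subseteq> grass m r"
        using crref_grass by (auto simp: E_def)
      show "grass m r \<subseteq> (\<lambda>(Hm, I). vec_space.col_space m Hm) ` E"
      proof
        fix H assume "H \<in> grass m r"
        then obtain Hm I where "crref m r Hm I" "vec_space.col_space m Hm = H" using crref_exists by blast
        then show "H \<in> (\<lambda>(Hm, I). vec_space.col_space m Hm) ` E" unfolding E_def
          by (intro rev_image_eqI[of "(Hm, I)"]) simp_all
      qed
    qed
  qed
  have E: "E = (\<lambda>(I, Hm). (Hm, I)) ` (SIGMA I:Ps. {Hm. crref m r Hm I})"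
  proof
    show "E \<subseteq> (\<lambda>(I, Hm). (Hm, I)) ` (SIGMA I:Ps. {Hm. crref m r Hm I})"
    proof
      fix p assume "p \<in> E"
      then obtain Hm I where p: "p = (Hm, I)" and C: "crref m r Hm I" unfolding E_def by auto
      have "I \<in> Ps" unfolding Ps_def using crrefD(2,3)[OF C] by simp
      then have "(I, Hm) \<in> (SIGMA I:Ps. {Hm. crref m r Hm I})" using C by simp
      then show "p \<in> (\<lambda>(I, Hm). (Hm, I)) ` (SIGMA I:Ps. {Hm. crref m r Hm I})"
        unfolding p by (rule rev_image_eqI) simp
    qed
    show "(\<lambda>(I, Hm). (Hm, I)) ` (SIGMA I:Ps. {Hm. crref m r Hm I}) \<subseteq> E"
      unfolding E_def by auto
  qed
  have "card E = card (SIGMA I:Ps. {Hm. crref m r Hm I})"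
    unfolding E by (rule card_image) (auto simp: inj_on_def)
  also have "\<dots> = (\<Sum>I\<in>Ps. card {Hm. crref m r Hm I})"
    using finPs card_CR(2) by (subst card_SigmaI) (auto simp: Ps_def)
  also have "\<dots> = (\<Sum>I\<in>Ps. 2 ^ card (invs m I))"
    by (rule sum.cong[OF refl]) (auto simp: Ps_def card_CR(1))
  finally show ?thesis using bij_betw_same_card[OF bij] Ps_def by simp
qed



lemma invs_Suc_notin:
  assumes "I \<subseteq> {0..<m}"
  shows "card (invs (Suc m) I) = card (invs m I) + card I"
proof -
  have finI: "finite I" using assms finite_subset by blast
  have eq: "invs (Suc m) I = invs m I \<union> (\<lambda>a. (a, m)) ` I"
    using assms unfolding invs_def by auto
  have "card (invs (Suc m) I) = card (invs m I) + card ((\<lambda>a. (a, m)) ` I)"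
    unfolding eq by (rule card_Un_disjoint) (use finite_invs finI in \<open>auto simp: invs_def\<close>)
  also have "card ((\<lambda>a. (a, m)) ` I) = card I" by (rule card_image) (auto simp: inj_on_def)
  finally show ?thesis .
qed

lemma invs_Suc_ins:
  assumes "I \<subseteq> {0..<m}"
  shows "invs (Suc m) (insert m I) = invs m I"
  using assms unfolding invs_def by auto

lemma tri_Suc: "Suc k * (Suc k + 1) div 2 = k * (k + 1) div 2 + Suc k"
proof -
  have "Suc k * (Suc k + 1) = k * (k + 1) + 2 * Suc k" by simp
  then show ?thesis by simp
qed

lemma prod_shift:
  "(1 + 2 * (x::nat)) * (\<Prod>i=1..m. 1 + 2 ^ i * (2 * x)) = (\<Prod>i=1..Suc m. 1 + 2 ^ i * x)"
proof (induction m)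
  case 0 then show ?case by simp
next
  case (Suc m)
  have "(1 + 2 * x) * (\<Prod>i=1..Suc m. 1 + 2 ^ i * (2 * x))
      = ((1 + 2 * x) * (\<Prod>i=1..m. 1 + 2 ^ i * (2 * x))) * (1 + 2 ^ Suc m * (2 * x))"
  proof -
    have "(\<Prod>i=1..Suc m. 1 + 2 ^ i * (2 * x)) = (\<Prod>i=1..m. 1 + 2 ^ i * (2 * x)) * (1 + 2 ^ Suc m * (2 * x))"
      using prod.nat_ivl_Suc'[of 1 m "\<lambda>i. 1 + 2 ^ i * (2 * x)"] by (simp add: mult.commute)
    then show ?thesis by (simp only: mult.assoc)
  qed
  also have "\<dots> = (\<Prod>i=1..Suc m. 1 + 2 ^ i * x) * (1 + 2 ^ Suc (Suc m) * x)"
  proof -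
    have e: "2 ^ Suc m * (2 * x) = 2 ^ Suc (Suc m) * (x::nat)" by simp
    show ?thesis unfolding Suc.IH e ..
  qed
  also have "\<dots> = (\<Prod>i=1..Suc (Suc m). 1 + 2 ^ i * x)" by simp
  finally show ?case .
qed

lemma gen_fun:
  "(\<Sum>I\<in>Pow {0..<m}. 2 ^ (card I * (card I + 1) div 2 + card (invs m I)) * (x::nat) ^ card I)
    = (\<Prod>i=1..m. 1 + 2 ^ i * x)"
proof (induction m arbitrary: x)
  case 0
  have "invs 0 {} = {}" unfolding invs_def by auto
  then show ?case by simp
next
  case (Suc m)
  let ?w = "\<lambda>I. 2 ^ (card I * (card I + 1) div 2 + card (invs m I)) * (2 * x) ^ card I"
  have P: "Pow {0..<Suc m} = Pow {0..<m} \<union> insert m ` Pow {0..<m}"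
    by (simp add: atLeast0_lessThan_Suc Pow_insert)
  have disj: "Pow {0..<m} \<inter> insert m ` Pow {0..<m} = {}" by auto
  have inj: "inj_on (insert m) (Pow {0..<m})"
    by (rule inj_onI) (metis PowD atLeastLessThan_iff insert_ident less_irrefl subsetD)
  have A: "2 ^ (card I * (card I + 1) div 2 + card (invs (Suc m) I)) * x ^ card I = ?w I"
    if "I \<in> Pow {0..<m}" for I
  proof -
    have "card (invs (Suc m) I) = card (invs m I) + card I" using invs_Suc_notin that by simp
    then show ?thesis by (simp add: power_add power_mult_distrib mult.assoc)
  qed
  have B: "2 ^ (card (insert m I) * (card (insert m I) + 1) div 2 + card (invs (Suc m) (insert m I))) * x ^ card (insert m I)
     = 2 * x * ?w I" if "I \<in> Pow {0..<m}" for I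
  proof -
    have finI: "finite I" "m \<notin> I" using that finite_subset by auto
    then have c: "card (insert m I) = Suc (card I)" by simp
    have "invs (Suc m) (insert m I) = invs m I" using invs_Suc_ins that by simp
    then show ?thesis unfolding c tri_Suc by (simp add: power_add power_mult_distrib ac_simps)
  qed
  have "(\<Sum>I\<in>Pow {0..<Suc m}. 2 ^ (card I * (card I + 1) div 2 + card (invs (Suc m) I)) * x ^ card I)
     = (\<Sum>I\<in>Pow {0..<m}. 2 ^ (card I * (card I + 1) div 2 + card (invs (Suc m) I)) * x ^ card I)
     + (\<Sum>I\<in>insert m ` Pow {0..<m}. 2 ^ (card I * (card I + 1) div 2 + card (invs (Suc m) I)) * x ^ card I)"
    unfolding P by (rule sum.union_disjoint) (use disj in auto)
  also have "(\<Sum>I\<in>Pow {0..<m}. 2 ^ (card I * (card I + 1) div 2 + card (invs (Suc m) I)) * x ^ card I)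
     = (\<Sum>I\<in>Pow {0..<m}. ?w I)" by (rule sum.cong[OF refl]) (rule A)
  also have "(\<Sum>I\<in>insert m ` Pow {0..<m}. 2 ^ (card I * (card I + 1) div 2 + card (invs (Suc m) I)) * x ^ card I)
     = (\<Sum>I\<in>Pow {0..<m}. 2 * x * ?w I)"
    unfolding sum.reindex[OF inj] o_def by (rule sum.cong[OF refl]) (rule B)
  also have "(\<Sum>I\<in>Pow {0..<m}. 2 * x * ?w I) = 2 * x * (\<Sum>I\<in>Pow {0..<m}. ?w I)"
    by (simp add: sum_distrib_left)
  also have "(\<Sum>I\<in>Pow {0..<m}. ?w I) = (\<Prod>i=1..m. 1 + 2 ^ i * (2 * x))" by (rule Suc.IH)
  also have "(\<Prod>i=1..m. 1 + 2 ^ i * (2 * x)) + 2 * x * (\<Prod>i=1..m. 1 + 2 ^ i * (2 * x))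
     = (1 + 2 * x) * (\<Prod>i=1..m. 1 + 2 ^ i * (2 * x))" by (simp add: algebra_simps)
  also have "\<dots> = (\<Prod>i=1..Suc m. 1 + 2 ^ i * x)" by (rule prod_shift)
  finally show ?case .
qed

lemma count_final: "(\<Sum>r=0..m. 2 ^ (r * (r + 1) div 2) * gauss_binom2 m r) = (\<Prod>i=1..m. 2 ^ i + 1)"
proof -
  have "(\<Sum>r=0..m. 2 ^ (r * (r + 1) div 2) * gauss_binom2 m r)
      = (\<Sum>r=0..m. \<Sum>I\<in>{I. I \<in> Pow {0..<m} \<and> card I = r}. 2 ^ (card I * (card I + 1) div 2 + card (invs m I)))"
  proof (rule sum.cong[OF refl])
    fix r assume "r \<in> {0..m}"
    have "2 ^ (r * (r + 1) div 2) * gauss_binom2 m r =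
        (\<Sum>I\<in>{I. I \<subseteq> {0..<m} \<and> card I = r}. 2 ^ (r * (r + 1) div 2) * 2 ^ card (invs m I))"
      unfolding gauss_binom2_def card_grass by (simp add: sum_distrib_left)
    also have "\<dots> = (\<Sum>I\<in>{I. I \<in> Pow {0..<m} \<and> card I = r}. 2 ^ (card I * (card I + 1) div 2 + card (invs m I)))"
      by (rule sum.cong) (auto simp: power_add)
    finally show "2 ^ (r * (r + 1) div 2) * gauss_binom2 m r =
        (\<Sum>I\<in>{I. I \<in> Pow {0..<m} \<and> card I = r}. 2 ^ (card I * (card I + 1) div 2 + card (invs m I)))" .
  qed
  also have "\<dots> = (\<Sum>I\<in>Pow {0..<m}. 2 ^ (card I * (card I + 1) div 2 + card (invs m I)))"
  proof (rule sum.group)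
    show "finite (Pow {0..<m::nat})" by simp
    show "finite {0..m}" by simp
    show "card ` Pow {0..<m} \<subseteq> {0..m}"
    proof
      fix k assume "k \<in> card ` Pow {0..<m}"
      then obtain I where "I \<subseteq> {0..<m}" "k = card I" by auto
      then have "k \<le> card {0..<m}" using card_mono[of "{0..<m}" I] by simp
      then show "k \<in> {0..m}" by simp
    qed
  qed
  also have "\<dots> = (\<Sum>I\<in>Pow {0..<m}. 2 ^ (card I * (card I + 1) div 2 + card (invs m I)) * 1 ^ card I)"
    by simp
  also have "\<dots> = (\<Prod>i=1..m. 1 + 2 ^ i * 1)" by (rule gen_fun)
  also have "\<dots> = (\<Prod>i=1..m. 2 ^ i + 1)" by (simp add: add.commute)
  finally show ?thesis .
qed

theorem mainTheorem2:
  fixes m :: nat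
  shows "bij_betw (lag_map m) (triples m) (lagrangians m) \<and>
         card (lagrangians m) = (\<Prod>i=1..m. 2 ^ i + 1) \<and>
         card (lagrangians m) = (\<Sum>r=0..m. 2 ^ (r * (r + 1) div 2) * gauss_binom2 m r)"
proof -
  have b: "bij_betw (lag_map m) (triples m) (lagrangians m)" by (rule lag_bij)
  have c: "card (lagrangians m) = (\<Sum>r=0..m. 2 ^ (r * (r + 1) div 2) * gauss_binom2 m r)"
    using bij_betw_same_card[OF b] card_triples by simp
  show ?thesis using b c count_final by simp
qed


end
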